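(* Let $n,k$ be positive integers with $n\ge 2(k+1)$, let $G=W_n^k$ be the web graph, and let $C\subseteq V(G)$ (possibly empty). Let $m_1=n-\delta_1+1$ where $\delta_1=\min_{v\in V}|N\langle v\rangle|$ (so $m_1=n-2k$ if $C=V$ and $m_1=n-2k+1$ if $C\ne V$). Then $\gamma_{\rm gr}(G;C)=m_1$ if (i) $C=V$, or (ii) there is $i\in V\setminus C$ such that $V\setminus N[i]$ induces a path $P_t$ with $t=n-2k-1$ and $C$ is a good configuration for this path. Otherwise $\gamma_{\rm gr}(G;C)=m_1-1$.
   Context: The web $W_n^k$ has vertex set $V=\{0,\dots,n-1\}$ and edge set $\{\{i,j\}: 0<|i-j|\le k \text{ or } |i-j|\ge n-k\}$. $N\langle v\rangle = N[v]$ (closed neighborhood) if $v\in C$ and $N\langle v\rangle=N(v)$ (open neighborhood) if $v\notin C$. A sequence $(v_1,\dots,v_s)$ of distinct vertices is legal if $N\langle v_i\rangle\setminus\bigcup_{j<i}N\langle v_j\rangle\neq\emptyset$ for all $i\ge 2$, and dominating if $\bigcup_j N\langle v_j\rangle=V$; $\gamma_{\rm gr}(G;C)$ is the maximum length of a legal dominating sequence. Good configuration (defined for a path with vertices $a_1,\dots,a_s$ in order, applied to $C\cap\{a_1,\dots,a_s\}$; isolated vertices outside $C$ are allowed): $C$ is a good configuration for the path if (i) $s=1$ and $a_1\in C$; or (ii) $s=2$ and $\{a_1,a_2\}\not\subseteq C$; or (iii) $s\ge 3$ and either $a_1\notin C$ and $C$ is a good configuration for $(a_3,\dots,a_s)$,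 or $a_s\notin C$ and $C$ is a good configuration for $(a_1,\dots,a_{s-2})$. *)

theory Defs
  imports Main
begin

definition web_V :: "nat \<Rightarrow> nat set" where
  "web_V n = {0..<n}"

definition web_adj :: "nat \<Rightarrow> nat \<Rightarrow> nat \<Rightarrow> nat \<Rightarrow> bool" where
  "web_adj n k i j \<longleftrightarrow> i < n \<and> j < n \<and> i \<noteq> j \<and>
     (nat \<bar>int i - int j\<bar> \<le> k \<or> nat \<bar>int i - int j\<bar> \<ge> n - k)"

definition open_nbhd :: "nat \<Rightarrow> nat \<Rightarrow> nat \<Rightarrow> nat set" where
  "open_nbhd n k v = {u \<in> web_V n. web_adj n k v u}"

definition closed_nbhd :: "nat \<Rightarrow> nat \<Rightarrow> nat \<Rightarrow> nat set" where
  "closed_nbhd n k v = insert v (open_nbhd n k v)"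

definition nbhdC :: "nat \<Rightarrow> nat \<Rightarrow> nat set \<Rightarrow> nat \<Rightarrow> nat set" where
  "nbhdC n k C v = (if v \<in> C then closed_nbhd n k v else open_nbhd n k v)"

definition legal_seq :: "nat \<Rightarrow> nat \<Rightarrow> nat set \<Rightarrow> nat list \<Rightarrow> bool" where
  "legal_seq n k C vs \<longleftrightarrow> distinct vs \<and> set vs \<subseteq> web_V n \<and>
     (\<forall>i. 1 \<le> i \<and> i < length vs \<longrightarrow>
        nbhdC n k C (vs ! i) - (\<Union>j<i. nbhdC n k C (vs ! j)) \<noteq> {})"

definition dominating_seq :: "nat \<Rightarrow> nat \<Rightarrow> nat set \<Rightarrow> nat list \<Rightarrow> bool" where
  "dominating_seq n k C vs \<longleftrightarrow> (\<Union>v\<in>set vs. nbhdC n k C v) = web_V n"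

definition gamma_gr :: "nat \<Rightarrow> nat \<Rightarrow> nat set \<Rightarrow> nat" where
  "gamma_gr n k C = Max {length vs | vs. legal_seq n k C vs \<and> dominating_seq n k C vs}"

text \<open>Good configuration of C for a path a_1,...,a_s given as a list.
  The empty path is not covered by the paper's definition; we set it to False.\<close>
function good_config :: "nat set \<Rightarrow> nat list \<Rightarrow> bool" where
  "good_config C [] = False"
| "good_config C [a] = (a \<in> C)"
| "good_config C [a, b] = (\<not> {a, b} \<subseteq> C)"
| "good_config C (a # b # c # rest) =
     ((a \<notin> C \<and> good_config C (c # rest)) \<or>
      (last (c # rest) \<notin> C \<and> good_config C (take (length rest + 1) (a # b # c # rest))))"
  by pat_completeness auto
termination by (relation "measure (\<lambda>(C, xs). length xs)") auto

definition induces_path :: "nat \<Rightarrow> nat \<Rightarrow> nat set \<Rightarrow> nat list \<Rightarrow> bool" where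
  "induces_path n k S as \<longleftrightarrow> distinct as \<and> set as = S \<and>
     (\<forall>p < length as. \<forall>q < length as.
        web_adj n k (as ! p) (as ! q) \<longleftrightarrow> (p = q + 1 \<or> q = p + 1))"

end

theory Submission
  imports Defs
begin

lemma natabs: "nat \<bar>int x - int y\<bar> = (if x \<le> y then y - x else x - y)"
  by auto

lemma adj_def2: "web_adj n k u v \<longleftrightarrow> u < n \<and> v < n \<and> u \<noteq> v \<and>
   ((u < v \<and> (v - u \<le> k \<or> v - u \<ge> n - k)) \<or> (v < u \<and> (u - v \<le> k \<or> u - v \<ge> n - k)))"
  unfolding web_adj_def natabs by auto

lemma adj_sym: "web_adj n k u v = web_adj n k v u"
  unfolding adj_def2 by auto

lemma adj_mod: "web_adj n k u v \<longleftrightarrow> u < n \<and> v < n \<and> u \<noteq> v \<and>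
   ((v + n - u) mod n \<le> k \<or> (v + n - u) mod n \<ge> n - k)"
proof (cases "u < n \<and> v < n \<and> u \<noteq> v")
  case True
  show ?thesis
  proof (cases "u < v")
    case True
    have "(v + n - u) mod n = v - u" using \<open>u < n \<and> v < n \<and> u \<noteq> v\<close> True
      by (metis Nat.add_diff_assoc2 less_imp_diff_less less_or_eq_imp_le mod_add_self2 mod_less)
    then show ?thesis using True \<open>u < n \<and> v < n \<and> u \<noteq> v\<close> unfolding adj_def2 by auto
  next
    case False
    have e: "v + n - u = n - (u - v)" using \<open>u < n \<and> v < n \<and> u \<noteq> v\<close> False by auto
    have "(v + n - u) mod n = n - (u - v)" unfolding e using \<open>u < n \<and> v < n \<and> u \<noteq> v\<close> False
      by (intro mod_less) auto
    then show ?thesis using False \<open>u < n \<and> v < n \<and> u \<noteq> v\<close> unfolding adj_def2 by auto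
  qed
next
  case False
  then show ?thesis unfolding adj_def2 by auto
qed

definition rot :: "nat \<Rightarrow> nat \<Rightarrow> nat \<Rightarrow> nat" where
  "rot n r v = (v + r) mod n"

lemma int_diffmod: "x < n \<Longrightarrow> y < n \<Longrightarrow> int ((x + n - y) mod n) = (int x - int y) mod int n"
proof -
  assume a: "x < n" "y < n"
  have "int ((x + n - y) mod n) = int (x + n - y) mod int n" by (simp add: zmod_int)
  also have "int (x + n - y) = (int x - int y) + int n" using a by simp
  finally show ?thesis by simp
qed

lemma rot_lt: "0 < n \<Longrightarrow> rot n r v < n" unfolding rot_def by simp

lemma rot_dist: assumes "u < n" "v < n"
  shows "(rot n r v + n - rot n r u) mod n = (v + n - u) mod n"
proof -
  have n: "0 < n" using assms by auto
  have "int ((rot n r v + n - rot n r u) mod n) = (int (rot n r v) - int (rot n r u)) mod int n"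
    by (rule int_diffmod[OF rot_lt[OF n] rot_lt[OF n]])
  also have "\<dots> = (int ((v + r) mod n) - int ((u + r) mod n)) mod int n" unfolding rot_def by simp
  also have "\<dots> = ((int v + int r) mod int n - (int u + int r) mod int n) mod int n"
    by (simp add: zmod_int)
  also have "\<dots> = ((int v + int r) - (int u + int r)) mod int n" by (simp add: mod_diff_eq)
  also have "\<dots> = (int v - int u) mod int n" by simp
  also have "\<dots> = int ((v + n - u) mod n)" using int_diffmod[OF assms(2,1)] by simp
  finally show ?thesis by simp
qed

lemma rot_inj: "u < n \<Longrightarrow> v < n \<Longrightarrow> rot n r u = rot n r v \<Longrightarrow> u = v"
proof -
  assume a: "u < n" "v < n" "rot n r u = rot n r v"
  have "(v + n - u) mod n = 0" using rot_dist[OF a(1,2), of r] a(3) by simp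
  moreover have "(v + n - u) mod n = (if u \<le> v then v - u else n - (u - v))"
    using a(1,2) by (auto simp: mod_if)
  ultimately show "u = v" using a(1,2) by (auto split: if_splits)
qed

lemma rot_inj_on: "inj_on (rot n r) {0..<n}"
  unfolding inj_on_def using rot_inj by auto

lemma rot_adj: "u < n \<Longrightarrow> v < n \<Longrightarrow> web_adj n k (rot n r u) (rot n r v) = web_adj n k u v"
  unfolding adj_mod using rot_dist[of u n v r] rot_lt[of n r] rot_inj[of u n v r] by auto

lemma rot_surj: "y < n \<Longrightarrow> \<exists>x<n. rot n r x = y"
proof -
  assume y: "y < n"
  define x where "x = (y + (n - r mod n)) mod n"
  have "x < n" using y unfolding x_def by simp
  moreover have "rot n r x = y"
  proof -
    have "rot n r x = (y + (n - r mod n) + r) mod n" unfolding rot_def x_def by (simp add: mod_add_left_eq)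
    also have "\<dots> = (y + (n - r mod n) + r mod n) mod n" by (simp add: mod_add_right_eq)
    also have "(y + (n - r mod n) + r mod n) = y + n" using y
      by (metis add.assoc le_add_diff_inverse2 mod_less_divisor order_less_imp_le le_less_trans zero_le)
    finally show ?thesis using y by simp
  qed
  ultimately show ?thesis by blast
qed

lemma rot_image_V: assumes "0 < n" shows "rot n r ` {0..<n} = {0..<n}"
proof
  show "rot n r ` {0..<n} \<subseteq> {0..<n}" using rot_lt[OF assms] by auto
next
  show "{0..<n} \<subseteq> rot n r ` {0..<n}"
  proof
    fix y assume "y \<in> {0..<n}"
    then obtain x where "x < n" "rot n r x = y" using rot_surj[of y n r] by auto
    then show "y \<in> rot n r ` {0..<n}" by force
  qed
qed

lemma rot_0: "i < n \<Longrightarrow> rot n i 0 = i" unfolding rot_def by simp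

lemma rot_rot: "v < n \<Longrightarrow> i < n \<Longrightarrow> rot n i (rot n (n - i) v) = v"
  unfolding rot_def
  by (metis add.assoc le_add_diff_inverse2 less_imp_le_nat mod_add_left_eq mod_add_self2 mod_less)

definition rC :: "nat \<Rightarrow> nat \<Rightarrow> nat set \<Rightarrow> nat set" where
  "rC n r C = {x. x < n \<and> rot n r x \<in> C}"

lemma open_sub: "open_nbhd n k v \<subseteq> {0..<n}" unfolding open_nbhd_def web_V_def by auto
lemma nbhdC_sub: "v < n \<Longrightarrow> nbhdC n k C v \<subseteq> {0..<n}"
  unfolding nbhdC_def closed_nbhd_def using open_sub by auto
lemma nbhdC_finite: assumes "v < n" shows "finite (nbhdC n k C v)"
proof -
  have "nbhdC n k C v \<subseteq> {0..<n}" using nbhdC_sub[OF assms] .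
  then show ?thesis using finite_subset by blast
qed

lemma rot_open: assumes "v < n" shows "open_nbhd n k (rot n r v) = rot n r ` open_nbhd n k v"
proof -
  have n: "0 < n" using assms by auto
  show ?thesis
  proof
    show "open_nbhd n k (rot n r v) \<subseteq> rot n r ` open_nbhd n k v"
    proof
      fix y assume "y \<in> open_nbhd n k (rot n r v)"
      then have y: "y < n" "web_adj n k (rot n r v) y" unfolding open_nbhd_def web_V_def by auto
      obtain x where x: "x < n" "rot n r x = y" using rot_surj[OF y(1)] by blast
      have "web_adj n k v x" using y(2) x(2) rot_adj[OF assms x(1), of k r] by simp
      then show "y \<in> rot n r ` open_nbhd n k v" using x unfolding open_nbhd_def web_V_def by auto
    qed
  next
    show "rot n r ` open_nbhd n k v \<subseteq> open_nbhd n k (rot n r v)"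
      using rot_adj[OF assms] rot_lt[OF n] unfolding open_nbhd_def web_V_def by auto
  qed
qed

lemma rot_closed: "v < n \<Longrightarrow> closed_nbhd n k (rot n r v) = rot n r ` closed_nbhd n k v"
  unfolding closed_nbhd_def using rot_open by simp

lemma rot_nbhdC: "v < n \<Longrightarrow> nbhdC n k C (rot n r v) = rot n r ` nbhdC n k (rC n r C) v"
  unfolding nbhdC_def rC_def using rot_open rot_closed by simp

lemma rot_diff: "A \<subseteq> {0..<n} \<Longrightarrow> B \<subseteq> {0..<n} \<Longrightarrow> rot n r ` (A - B) = rot n r ` A - rot n r ` B"
  by (rule inj_on_image_set_diff[OF rot_inj_on]) auto

lemma rot_legal: assumes "set ws \<subseteq> {0..<n}"
  shows "legal_seq n k C (map (rot n r) ws) = legal_seq n k (rC n r C) ws"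
proof -
  have d: "distinct (map (rot n r) ws) = distinct ws"
    using assms by (simp add: distinct_map inj_on_subset[OF rot_inj_on])
  have s: "set (map (rot n r) ws) \<subseteq> {0..<n}"
  proof
    fix y assume "y \<in> set (map (rot n r) ws)"
    then obtain x where x: "x \<in> set ws" "y = rot n r x" by auto
    then have "0 < n" using assms by fastforce
    then show "y \<in> {0..<n}" using x rot_lt by auto
  qed
  have c: "(nbhdC n k C (map (rot n r) ws ! i) - (\<Union>j<i. nbhdC n k C (map (rot n r) ws ! j)) \<noteq> {})
      = (nbhdC n k (rC n r C) (ws ! i) - (\<Union>j<i. nbhdC n k (rC n r C) (ws ! j)) \<noteq> {})"
    if i: "i < length ws" for i
  proof -
    have wl: "\<And>j. j < length ws \<Longrightarrow> ws ! j < n" using assms nth_mem by fastforce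
    have "nbhdC n k C (map (rot n r) ws ! i) - (\<Union>j<i. nbhdC n k C (map (rot n r) ws ! j))
       = rot n r ` nbhdC n k (rC n r C) (ws ! i) - rot n r ` (\<Union>j<i. nbhdC n k (rC n r C) (ws ! j))"
    proof -
      have 1: "nbhdC n k C (map (rot n r) ws ! i) = rot n r ` nbhdC n k (rC n r C) (ws ! i)"
        using i wl[OF i] by (simp add: rot_nbhdC)
      have "(\<Union>j<i. nbhdC n k C (map (rot n r) ws ! j)) = (\<Union>j<i. rot n r ` nbhdC n k (rC n r C) (ws ! j))"
      proof (rule SUP_cong[OF refl])
        fix j assume "j \<in> {..<i}"
        then have j: "j < length ws" using i by auto
        show "nbhdC n k C (map (rot n r) ws ! j) = rot n r ` nbhdC n k (rC n r C) (ws ! j)"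
          using j wl[OF j] by (simp add: rot_nbhdC)
      qed
      also have "\<dots> = rot n r ` (\<Union>j<i. nbhdC n k (rC n r C) (ws ! j))" by (rule image_UN[symmetric])
      finally show ?thesis using 1 by simp
    qed
    also have "\<dots> = rot n r ` (nbhdC n k (rC n r C) (ws ! i) - (\<Union>j<i. nbhdC n k (rC n r C) (ws ! j)))"
    proof (rule rot_diff[symmetric])
      show "nbhdC n k (rC n r C) (ws ! i) \<subseteq> {0..<n}" by (rule nbhdC_sub[OF wl[OF i]])
      show "(\<Union>j<i. nbhdC n k (rC n r C) (ws ! j)) \<subseteq> {0..<n}"
      proof (rule UN_least)
        fix j assume "j \<in> {..<i}"
        then have "j < length ws" using i by auto
        then show "nbhdC n k (rC n r C) (ws ! j) \<subseteq> {0..<n}" by (rule nbhdC_sub[OF wl])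
      qed
    qed
    finally show ?thesis by simp
  qed
  show ?thesis unfolding legal_seq_def web_V_def using d s assms c by auto
qed

lemma rot_img_eqV: assumes "A \<subseteq> {0..<n}" shows "(rot n r ` A = {0..<n}) = (A = {0..<n})"
proof
  assume h: "rot n r ` A = {0..<n}"
  show "A = {0..<n}"
  proof (rule ccontr)
    assume "A \<noteq> {0..<n}"
    then obtain x where "x \<in> {0..<n} - A" using assms by blast
    then have x: "x < n" "x \<notin> A" by auto
    have "rot n r x \<in> rot n r ` A" using h rot_lt[of n r x] x by auto
    then obtain y where "y \<in> A" "rot n r y = rot n r x" by auto
    then show False using rot_inj[of y n x r] x assms by auto
  qed
next
  assume "A = {0..<n}"
  then show "rot n r ` A = {0..<n}" by (cases "n = 0") (auto simp: rot_image_V)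
qed

lemma rot_dom: assumes "set ws \<subseteq> {0..<n}"
  shows "dominating_seq n k C (map (rot n r) ws) = dominating_seq n k (rC n r C) ws"
proof -
  have "(\<Union>v\<in>set (map (rot n r) ws). nbhdC n k C v) = (\<Union>x\<in>set ws. nbhdC n k C (rot n r x))" by simp
  also have "\<dots> = (\<Union>x\<in>set ws. rot n r ` nbhdC n k (rC n r C) x)"
    using assms by (intro SUP_cong refl rot_nbhdC) auto
  also have "\<dots> = rot n r ` (\<Union>v\<in>set ws. nbhdC n k (rC n r C) v)" by (simp add: image_UN)
  finally have "(\<Union>v\<in>set (map (rot n r) ws). nbhdC n k C v) = rot n r ` (\<Union>v\<in>set ws. nbhdC n k (rC n r C) v)" .
  moreover have "(\<Union>v\<in>set ws. nbhdC n k (rC n r C) v) \<subseteq> {0..<n}"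
  proof (rule UN_least)
    fix v assume "v \<in> set ws"
    then have "v < n" using assms by auto
    then show "nbhdC n k (rC n r C) v \<subseteq> {0..<n}" by (rule nbhdC_sub)
  qed
  ultimately show ?thesis unfolding dominating_seq_def web_V_def using rot_img_eqV by simp
qed

lemma rot_induces: assumes "S \<subseteq> {0..<n}" "set as \<subseteq> {0..<n}"
  shows "induces_path n k (rot n r ` S) (map (rot n r) as) = induces_path n k S as"
proof -
  have d: "distinct (map (rot n r) as) = distinct as"
    using assms by (simp add: distinct_map inj_on_subset[OF rot_inj_on])
  have s: "(rot n r ` set as = rot n r ` S) = (set as = S)"
    using assms inj_on_image_eq_iff[OF rot_inj_on] by blast
  have wl: "\<And>j. j < length as \<Longrightarrow> as ! j < n" using assms nth_mem by fastforce
  show ?thesis unfolding induces_path_def using d s wl rot_adj by auto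
qed

lemma good_map: "good_config C (map f xs) = good_config (f -` C) xs"
proof (induction C xs rule: good_config.induct)
  case (4 C a b c rest)
  have e1: "take (length (map f rest) + 1) (f a # f b # f c # map f rest) = map f (take (length rest + 1) (a # b # c # rest))"
    by (metis length_map list.map(2) take_map)
  have e2: "last (f c # map f rest) = f (last (c # rest))" by (metis last_map list.distinct(1) list.map(2))
  have "good_config C (map f (a # b # c # rest)) = ((f a \<notin> C \<and> good_config C (map f (c # rest))) \<or>
      (f (last (c # rest)) \<notin> C \<and> good_config C (map f (take (length rest + 1) (a # b # c # rest)))))"
    using e1 e2 by (simp del: take_Suc_Cons)
  then show ?case using 4 by (simp del: take_Suc_Cons)
qed auto

lemma good_cong: "(\<forall>x\<in>set xs. x \<in> C \<longleftrightarrow> x \<in> D) \<Longrightarrow> good_config C xs = good_config D xs"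
proof (induction C xs rule: good_config.induct)
  case (4 C a b c rest)
  have t: "set (take (length rest + 1) (a # b # c # rest)) \<subseteq> set (a # b # c # rest)"
    by (rule set_take_subset)
  have l: "last (c # rest) \<in> set (a # b # c # rest)" by (metis last_in_set list.distinct(1) list.set_intros(2))
  have h1: "\<forall>x\<in>set (c # rest). x \<in> C \<longleftrightarrow> x \<in> D" using 4(3) by simp
  have h2: "\<forall>x\<in>set (take (length rest + 1) (a # b # c # rest)). x \<in> C \<longleftrightarrow> x \<in> D" using 4(3) t by blast
  have I1: "good_config C (c # rest) = good_config D (c # rest)" using 4(1)[OF h1] .
  have I2: "good_config C (take (length rest + 1) (a # b # c # rest)) = good_config D (take (length rest + 1) (a # b # c # rest))"
    using 4(2)[OF h2] .
  have m: "(a \<in> C) = (a \<in> D)" "(last (c # rest) \<in> C) = (last (c # rest) \<in> D)" using 4(3) l by auto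
  show ?case unfolding good_config.simps(4) I1 I2 m ..
qed auto

lemma good_long: "length xs \<ge> 3 \<Longrightarrow> good_config C xs =
   ((hd xs \<notin> C \<and> good_config C (drop 2 xs)) \<or> (last xs \<notin> C \<and> good_config C (take (length xs - 2) xs)))"
proof -
  assume "length xs \<ge> 3"
  then obtain a b c rest where xs: "xs = a # b # c # rest"
    by (metis One_nat_def Suc_le_length_iff numeral_3_eq_3)
  show ?thesis unfolding xs by (simp del: take_Suc_Cons)
qed

lemma good_rev: "good_config C (rev xs) = good_config C xs"
proof (induction "length xs" arbitrary: xs rule: less_induct)
  case less
  show ?case
  proof (cases "length xs \<ge> 3")
    case True
    have l: "length (rev xs) \<ge> 3" using True by simp
    have xs: "xs \<noteq> []" using True by auto
    have 1: "drop 2 (rev xs) = rev (take (length xs - 2) xs)" using True by (simp add: rev_take)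
    have 2: "take (length xs - 2) (rev xs) = rev (drop 2 xs)" by (simp add: rev_drop)
    have 3: "hd (rev xs) = last xs" "last (rev xs) = hd xs" using xs by (auto simp: hd_rev last_rev)
    have i1: "good_config C (rev (take (length xs - 2) xs)) = good_config C (take (length xs - 2) xs)"
      using less True by simp
    have i2: "good_config C (rev (drop 2 xs)) = good_config C (drop 2 xs)"
      using less True by simp
    show ?thesis unfolding good_long[OF l] good_long[OF True] length_rev 1 2 3 i1 i2 by auto
  next
    case False
    then have "xs = [] \<or> (\<exists>a. xs = [a]) \<or> (\<exists>a b. xs = [a, b])"
    proof (cases xs)
      case (Cons a t)
      show ?thesis
      proof (cases t)
        case (Cons b u)
        have "u = []" using False Cons \<open>xs = a # t\<close> by (cases u) auto
        then show ?thesis using Cons \<open>xs = a # t\<close> by simp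
      qed (use Cons in simp)
    qed simp
    then show ?thesis by auto
  qed
qed

fun lext :: "nat \<Rightarrow> nat \<Rightarrow> nat set \<Rightarrow> nat set \<Rightarrow> nat list \<Rightarrow> bool" where
  "lext n k C K [] = True"
| "lext n k C K (w # ws) = (nbhdC n k C w - K \<noteq> {} \<and> lext n k C (K \<union> nbhdC n k C w) ws)"

fun lext1 :: "nat \<Rightarrow> nat \<Rightarrow> nat set \<Rightarrow> nat set \<Rightarrow> nat list \<Rightarrow> bool" where
  "lext1 n k C K [] = True"
| "lext1 n k C K (w # ws) = ((\<exists>x. nbhdC n k C w - K = {x}) \<and> lext1 n k C (K \<union> nbhdC n k C w) ws)"

definition cover :: "nat \<Rightarrow> nat \<Rightarrow> nat set \<Rightarrow> nat set \<Rightarrow> nat list \<Rightarrow> nat set" where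
  "cover n k C K ws = K \<union> (\<Union>w\<in>set ws. nbhdC n k C w)"

lemma cover_Nil[simp]: "cover n k C K [] = K" unfolding cover_def by simp
lemma cover_Cons: "cover n k C K (w # ws) = cover n k C (K \<union> nbhdC n k C w) ws"
  unfolding cover_def by auto
lemma cover_append: "cover n k C K (xs @ ys) = cover n k C (cover n k C K xs) ys"
  unfolding cover_def by auto

lemma UN_less_Suc: "(\<Union>j<Suc i. f j) = f 0 \<union> (\<Union>j<i. f (Suc j))"
  by (auto simp: less_Suc_eq_0_disj)

lemma all_less_Suc': "(\<forall>i<Suc m. P i) = (P 0 \<and> (\<forall>i<m. P (Suc i)))"
  by (auto simp: less_Suc_eq_0_disj)

lemma lext_iff: "lext n k C K ws = (\<forall>i<length ws. nbhdC n k C (ws ! i) - (K \<union> (\<Union>j<i. nbhdC n k C (ws ! j))) \<noteq> {})"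
proof (induction ws arbitrary: K)
  case Nil
  then show ?case by simp
next
  case (Cons w ws)
  have "(\<forall>i<length (w # ws). nbhdC n k C ((w # ws) ! i) - (K \<union> (\<Union>j<i. nbhdC n k C ((w # ws) ! j))) \<noteq> {})
    = (nbhdC n k C w - K \<noteq> {} \<and> (\<forall>i<length ws. nbhdC n k C (ws ! i) - ((K \<union> nbhdC n k C w) \<union> (\<Union>j<i. nbhdC n k C (ws ! j))) \<noteq> {}))"
    by (simp add: all_less_Suc' UN_less_Suc Un_assoc del: UN_simps) 
  then show ?case using Cons by simp
qed

lemma legal_cons: "legal_seq n k C (v # ws) =
   (distinct (v # ws) \<and> set (v # ws) \<subseteq> {0..<n} \<and> lext n k C (nbhdC n k C v) ws)"
proof -
  have "(\<forall>i. 1 \<le> i \<and> i < length (v # ws) \<longrightarrow>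
        nbhdC n k C ((v # ws) ! i) - (\<Union>j<i. nbhdC n k C ((v # ws) ! j)) \<noteq> {})
     = (\<forall>i<length ws. nbhdC n k C (ws ! i) - (nbhdC n k C v \<union> (\<Union>j<i. nbhdC n k C (ws ! j))) \<noteq> {})"
  proof -
    have "(\<forall>i. 1 \<le> i \<and> i < length (v # ws) \<longrightarrow> P i) = (\<forall>i<length ws. P (Suc i))" for P
      by (auto, metis One_nat_def Suc_le_eq Suc_pred length_Cons not_less_eq)
    then show ?thesis by (simp add: UN_less_Suc del: UN_simps)
  qed
  then show ?thesis unfolding legal_seq_def lext_iff web_V_def by simp
qed

lemma dom_cons: "dominating_seq n k C (v # ws) = (cover n k C (nbhdC n k C v) ws = {0..<n})"
  unfolding dominating_seq_def cover_def web_V_def by simp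

lemma lext_count: "finite K \<Longrightarrow> set ws \<subseteq> {0..<n} \<Longrightarrow> lext n k C K ws \<Longrightarrow>
   card (cover n k C K ws) \<ge> card K + length ws"
proof (induction ws arbitrary: K)
  case Nil
  then show ?case by simp
next
  case (Cons w ws)
  have f: "finite (K \<union> nbhdC n k C w)" using Cons.prems nbhdC_finite by auto
  have "card (K \<union> nbhdC n k C w) \<ge> card K + 1"
  proof -
    have "K \<subset> K \<union> nbhdC n k C w" using Cons.prems(3) by auto
    then show ?thesis using psubset_card_mono[OF f \<open>K \<subset> K \<union> nbhdC n k C w\<close>] by simp
  qed
  moreover have "card (cover n k C (K \<union> nbhdC n k C w) ws) \<ge> card (K \<union> nbhdC n k C w) + length ws"
    using Cons f by simp
  ultimately show ?case unfolding cover_Cons by simp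
qed

lemma lext1_lext: "lext1 n k C K ws \<Longrightarrow> lext n k C K ws"
  by (induction ws arbitrary: K) auto

lemma lext1_count: "finite K \<Longrightarrow> set ws \<subseteq> {0..<n} \<Longrightarrow> lext1 n k C K ws \<Longrightarrow>
   card (cover n k C K ws) = card K + length ws"
proof (induction ws arbitrary: K)
  case Nil
  then show ?case by simp
next
  case (Cons w ws)
  have f: "finite (K \<union> nbhdC n k C w)" using Cons.prems nbhdC_finite by auto
  obtain x where x: "nbhdC n k C w - K = {x}" using Cons.prems(3) by auto
  have "K \<union> nbhdC n k C w = insert x K" using x by auto
  moreover have "x \<notin> K" using x by auto
  ultimately have "card (K \<union> nbhdC n k C w) = card K + 1" using Cons.prems(1) by simp
  moreover have "card (cover n k C (K \<union> nbhdC n k C w) ws) = card (K \<union> nbhdC n k C w) + length ws"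
    using Cons f by simp
  ultimately show ?case unfolding cover_Cons by simp
qed

lemma lext1_append: "lext1 n k C K (xs @ ys) = (lext1 n k C K xs \<and> lext1 n k C (cover n k C K xs) ys)"
  by (induction xs arbitrary: K) (auto simp: cover_Cons)

lemma first_step:
  assumes "K \<subseteq> {0..<n}" "set (w # ws) \<subseteq> {0..<n}" "lext n k C K (w # ws)"
    "cover n k C K (w # ws) = {0..<n}" "length (w # ws) = card ({0..<n} - K)"
  shows "card (nbhdC n k C w - K) = 1 \<and> length ws = card ({0..<n} - (K \<union> nbhdC n k C w))"
proof -
  have fK: "finite K" using assms(1) finite_subset by blast
  have w: "w < n" using assms(2) by auto
  have sub: "nbhdC n k C w \<subseteq> {0..<n}" using nbhdC_sub[OF w] .
  have fN: "finite (nbhdC n k C w)" using nbhdC_finite[OF w] .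
  have c1: "card (K \<union> nbhdC n k C w) = card K + card (nbhdC n k C w - K)"
  proof -
    have "K \<union> nbhdC n k C w = K \<union> (nbhdC n k C w - K)" by auto
    moreover have "card (K \<union> (nbhdC n k C w - K)) = card K + card (nbhdC n k C w - K)"
      by (rule card_Un_disjoint) (use fK fN in auto)
    ultimately show ?thesis by simp
  qed
  have "card (cover n k C (K \<union> nbhdC n k C w) ws) \<ge> card (K \<union> nbhdC n k C w) + length ws"
    using lext_count[of "K \<union> nbhdC n k C w" ws n k C] fK fN assms(2,3) by auto
  moreover have "cover n k C (K \<union> nbhdC n k C w) ws = {0..<n}" using assms(4) by (simp add: cover_Cons)
  moreover have "card ({0..<n} - K) = n - card K" using assms(1) by (simp add: card_Diff_subset fK)
  moreover have "card K \<le> n" using assms(1) by (metis card_atLeastLessThan card_mono finite_atLeastLessThan minus_nat.diff_0)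
  moreover have "nbhdC n k C w - K \<noteq> {}" using assms(3) by simp
  then have "card (nbhdC n k C w - K) \<ge> 1" using fN by (simp add: Suc_leI card_gt_0_iff)
  ultimately have e: "card (nbhdC n k C w - K) = 1" using assms(5) c1 by simp
  have "card ({0..<n} - (K \<union> nbhdC n k C w)) = n - card (K \<union> nbhdC n k C w)"
    using assms(1) sub by (simp add: card_Diff_subset fK fN)
  then show ?thesis using e c1 assms(5) \<open>card ({0..<n} - K) = n - card K\<close> by simp
qed

lemma unwind:
  assumes "\<forall>j<m. nbhdC n k C (c j) \<subseteq> K \<union> e ` {..j}" "\<forall>j<m. e j \<in> nbhdC n k C (c j)"
    "\<forall>j<m. e j \<notin> K" "\<forall>i j. i < j \<longrightarrow> j < m \<longrightarrow> e i \<noteq> e j"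
  shows "lext1 n k C K (map c [0..<m]) \<and> cover n k C K (map c [0..<m]) = K \<union> e ` {..<m}"
  using assms
proof (induction m)
  case 0
  then show ?case by simp
next
  case (Suc m)
  then have IH: "lext1 n k C K (map c [0..<m]) \<and> cover n k C K (map c [0..<m]) = K \<union> e ` {..<m}" by auto
  have a: "nbhdC n k C (c m) \<subseteq> K \<union> e ` {..m}" "e m \<in> nbhdC n k C (c m)" "e m \<notin> K"
    using Suc.prems by auto
  have "e m \<notin> e ` {..<m}"
  proof
    assume "e m \<in> e ` {..<m}"
    then obtain x where "x < m" "e m = e x" by auto
    then show False using Suc.prems(4) by (metis lessI)
  qed
  note a = a this
  have "{..m} = insert m {..<m}" by auto
  then have "nbhdC n k C (c m) - (K \<union> e ` {..<m}) = {e m}" using a by auto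
  moreover have "K \<union> e ` {..<m} \<union> nbhdC n k C (c m) = K \<union> e ` {..<Suc m}"
    using a \<open>{..m} = insert m {..<m}\<close> by (auto simp: lessThan_Suc)
  ultimately show ?case using IH by (simp add: lext1_append cover_append cover_Cons)
qed

lemma nbhdC_ge: "open_nbhd n k v \<subseteq> nbhdC n k C v" unfolding nbhdC_def closed_nbhd_def by auto
lemma nbhdC_le: "nbhdC n k C v \<subseteq> closed_nbhd n k v" unfolding nbhdC_def closed_nbhd_def by auto
lemma open_iff: "x \<in> open_nbhd n k v \<longleftrightarrow> web_adj n k v x" unfolding open_nbhd_def web_V_def adj_def2 by auto
lemma closed_iff: "x \<in> closed_nbhd n k v \<longleftrightarrow> x = v \<or> web_adj n k v x" by (simp add: closed_nbhd_def open_iff)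

lemma open0: "2 * k < n \<Longrightarrow> open_nbhd n k 0 = {1..k} \<union> {n-k..<n}"
  unfolding open_nbhd_def web_V_def adj_def2 by auto

lemma card_open0: "2 * k < n \<Longrightarrow> card (open_nbhd n k 0) = 2 * k"
proof -
  assume a: "2 * k < n"
  have "card ({1..k} \<union> {n-k..<n}) = card {1..k} + card {n-k..<n}"
    using a by (intro card_Un_disjoint) auto
  then show ?thesis using open0[OF a] a by simp
qed

lemma card_open: assumes "2 * k < n" "v < n" shows "card (open_nbhd n k v) = 2 * k"
proof -
  have "open_nbhd n k v = rot n v ` open_nbhd n k 0" using rot_open[of 0 n k v] rot_0[OF assms(2)] assms by simp
  moreover have "inj_on (rot n v) (open_nbhd n k 0)" using inj_on_subset[OF rot_inj_on open_sub] .
  ultimately show ?thesis using card_open0[OF assms(1)] by (simp add: card_image)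
qed

lemma card_closed: assumes "2 * k < n" "v < n" shows "card (closed_nbhd n k v) = 2 * k + 1"
proof -
  have "v \<notin> open_nbhd n k v" unfolding open_iff adj_def2 by auto
  moreover have "finite (open_nbhd n k v)" by (rule finite_subset[OF open_sub]) simp
  ultimately show ?thesis unfolding closed_nbhd_def using card_open[OF assms] by simp
qed

lemma card_nbhdC: "2 * k < n \<Longrightarrow> v < n \<Longrightarrow> card (nbhdC n k C v) = (if v \<in> C then 2 * k + 1 else 2 * k)"
  unfolding nbhdC_def using card_open card_closed by simp

lemma Min_card: assumes "2 * k < n" "C \<subseteq> {0..<n}"
  shows "Min ((\<lambda>v. card (nbhdC n k C v)) ` web_V n) = (if C = web_V n then 2 * k + 1 else 2 * k)"
proof -
  have ne: "web_V n \<noteq> {}" using assms unfolding web_V_def by auto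
  have fin: "finite (web_V n)" unfolding web_V_def by simp
  show ?thesis
  proof (cases "C = web_V n")
    case True
    then have "(\<lambda>v. card (nbhdC n k C v)) ` web_V n = {2 * k + 1}"
      using card_nbhdC[OF assms(1)] ne unfolding web_V_def by auto
    then show ?thesis using True by simp
  next
    case False
    then obtain u where "u \<in> {0..<n} - C" using assms(2) unfolding web_V_def by blast
    then have u: "u < n" "u \<notin> C" by auto
    have "card (nbhdC n k C u) = 2 * k" using u card_nbhdC[OF assms(1) u(1), of C] by simp
    then have "2 * k \<in> (\<lambda>v. card (nbhdC n k C v)) ` web_V n"
      using u unfolding web_V_def by (intro rev_image_eqI[of u]) auto
    moreover have "\<forall>x \<in> (\<lambda>v. card (nbhdC n k C v)) ` web_V n. 2 * k \<le> x"
      using card_nbhdC[OF assms(1)] unfolding web_V_def by auto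
    ultimately show ?thesis using False fin by (intro Min_eqI) auto
  qed
qed

lemma base_seq: assumes "k \<ge> 1" "2 * k + 2 \<le> n"
  shows "legal_seq n k C [0..<n - 2 * k] \<and> dominating_seq n k C [0..<n - 2 * k]"
proof -
  have e: "[0..<n - 2 * k] = 0 # [1..<n - 2 * k]" using assms by (simp add: upt_rec)
  let ?ws = "[1..<n - 2 * k]"
  have lx: "lext n k C (nbhdC n k C 0) ?ws"
    unfolding lext_iff
  proof (intro allI impI)
    fix i assume i: "i < length ?ws"
    then have i': "i + 1 + k < n - k" by simp
    have wi: "?ws ! i = i + 1" using i by simp
    have "i + 1 < n" "i + 1 + k < n" using i' by linarith+
    then have "web_adj n k (i+1) (i+1+k)" unfolding adj_def2 using assms(1) by simp
    then have "i + 1 + k \<in> open_nbhd n k (i+1)" by (simp add: open_iff)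
    then have "i + 1 + k \<in> nbhdC n k C (?ws ! i)" unfolding wi by (rule subsetD[OF nbhdC_ge])
    moreover have "i + 1 + k \<notin> nbhdC n k C 0"
    proof -
      have "i + 1 + k \<noteq> 0" by simp
      moreover have "\<not> web_adj n k 0 (i+1+k)" unfolding adj_def2 using i' by simp
      ultimately have "i + 1 + k \<notin> closed_nbhd n k 0" by (simp add: closed_iff)
      then show ?thesis using nbhdC_le[of n k C 0] by blast
    qed
    moreover have "i + 1 + k \<notin> nbhdC n k C (?ws ! j)" if "j < i" for j
    proof -
      have wj: "?ws ! j = j + 1" using i that by simp
      have "i + 1 + k \<noteq> j + 1" using that by simp
      moreover have "\<not> web_adj n k (j+1) (i+1+k)" unfolding adj_def2 using i' that by auto
      ultimately have "i + 1 + k \<notin> closed_nbhd n k (j+1)" by (simp add: closed_iff)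
      then show ?thesis using nbhdC_le[of n k C "j+1"] wj by auto
    qed
    ultimately show "nbhdC n k C (?ws ! i) - (nbhdC n k C 0 \<union> (\<Union>j<i. nbhdC n k C (?ws ! j))) \<noteq> {}"
      by blast
  qed
  have cv: "cover n k C (nbhdC n k C 0) ?ws = {0..<n}"
  proof
    show "cover n k C (nbhdC n k C 0) ?ws \<subseteq> {0..<n}" unfolding cover_def
    proof (intro Un_least UN_least)
      show "nbhdC n k C 0 \<subseteq> {0..<n}" by (rule nbhdC_sub) (use assms in simp)
      fix x assume "x \<in> set ?ws"
      then have "x < n" by auto
      then show "nbhdC n k C x \<subseteq> {0..<n}" by (rule nbhdC_sub)
    qed
  next
    show "{0..<n} \<subseteq> cover n k C (nbhdC n k C 0) ?ws"
    proof
      fix x assume x: "x \<in> {0..<n}"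
      show "x \<in> cover n k C (nbhdC n k C 0) ?ws"
      proof (cases "x = 0")
        case True
        have "1 \<in> set ?ws" using assms by simp
        moreover have "web_adj n k 1 0" using assms unfolding adj_def2 by simp
        then have "0 \<in> open_nbhd n k 1" by (simp add: open_iff)
        then have "0 \<in> nbhdC n k C 1" by (rule subsetD[OF nbhdC_ge])
        ultimately show ?thesis unfolding cover_def True by blast
      next
        case False
        show ?thesis
        proof (cases "x \<le> k \<or> x \<ge> n - k")
          case True
          have "0 < x" "x < n" using x False by auto
          then have "web_adj n k 0 x" using True unfolding adj_def2 by simp
          then have "x \<in> open_nbhd n k 0" by (simp add: open_iff)
          then have "x \<in> nbhdC n k C 0" by (rule subsetD[OF nbhdC_ge])
          then show ?thesis unfolding cover_def by blast
        next
          case F2: False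
          have xk: "k < x" "x < n - k" "x < n" using F2 x by auto
          have "x - k \<in> set ?ws" using xk assms by auto
          moreover have "x - (x - k) = k" "x - k < x" using xk assms by auto
          then have "web_adj n k (x - k) x" using xk assms unfolding adj_def2 by auto
          then have "x \<in> open_nbhd n k (x - k)" by (simp add: open_iff)
          then have "x \<in> nbhdC n k C (x - k)" by (rule subsetD[OF nbhdC_ge])
          ultimately show ?thesis unfolding cover_def by blast
        qed
      qed
    qed
  qed
  have dist: "distinct (0 # ?ws)" by simp
  have sub: "set (0 # ?ws) \<subseteq> {0..<n}" using assms by auto
  have l: "legal_seq n k C (0 # ?ws)" unfolding legal_cons using lx dist sub by blast
  have d: "dominating_seq n k C (0 # ?ws)" unfolding dom_cons using cv .
  show ?thesis unfolding e using l d by blast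
qed

lemma nb1: assumes "4 \<le> n" "x < n"
  shows "open_nbhd n 1 x = (if x = 0 then {1, n - 1} else if x = n - 1 then {n - 2, 0} else {x - 1, x + 1})"
proof -
  have "y \<in> open_nbhd n 1 x \<longleftrightarrow> y \<in> (if x = 0 then {1, n - 1} else if x = n - 1 then {n - 2, 0} else {x - 1, x + 1})" for y
    unfolding open_iff adj_def2 using assms by auto
  then show ?thesis by blast
qed

definition inR :: "nat \<Rightarrow> nat \<Rightarrow> nat \<Rightarrow> nat \<Rightarrow> bool" where
  "inR n l r x \<longleftrightarrow> x < n \<and> ((even x \<and> x \<le> 2 * l) \<or> (2 * l + 2 \<le> x \<and> x + 2 * r + 2 \<le> n) \<or> (n \<le> x + 2 * r \<and> even (n - x)))"

definition chain :: "nat \<Rightarrow> nat \<Rightarrow> nat \<Rightarrow> nat \<Rightarrow> bool" where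
  "chain n l r x \<longleftrightarrow> x < n \<and> ((even x \<and> x \<le> 2 * l) \<or> (n \<le> x + 2 * r \<and> even (n - x)))"

definition KK :: "nat \<Rightarrow> nat \<Rightarrow> nat \<Rightarrow> nat set" where
  "KK n l r = {x. x < n \<and> \<not> inR n l r x}"

lemma KK_sub: "KK n l r \<subseteq> {0..<n}" unfolding KK_def by auto

lemma KK00: assumes "4 \<le> n" shows "KK n 0 0 = open_nbhd n 1 0"
proof -
  have "KK n 0 0 = {1, n - 1}" unfolding KK_def inR_def using assms by (auto; presburger)
  moreover have "open_nbhd n 1 0 = {1, n - 1}" using nb1[OF assms, of 0] assms by simp
  ultimately show ?thesis by simp
qed

lemma chain00: "chain n 0 0 x \<longleftrightarrow> x = 0 \<and> 0 < n" unfolding chain_def by auto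

lemma KK_step_l: assumes "2 * l + 2 * r + 6 \<le> n"
  shows "KK n l r \<union> {2 * l + 1, 2 * l + 3} = KK n (l + 1) r"
  using assms unfolding KK_def inR_def by (auto; presburger?)

lemma KK_step_r: assumes "2 * l + 2 * r + 6 \<le> n"
  shows "KK n l r \<union> {n - 2 * r - 3, n - 2 * r - 1} = KK n l (r + 1)"
  using assms unfolding KK_def inR_def by (auto; presburger?)

lemma chain_step_l: "2 * l + 2 < n \<Longrightarrow> chain n (l + 1) r x \<longleftrightarrow> chain n l r x \<or> x = 2 * l + 2"
  unfolding chain_def by (auto; presburger?)

lemma chain_step_r: "2 * r + 2 < n \<Longrightarrow> chain n l (r + 1) x \<longleftrightarrow> chain n l r x \<or> x = n - 2 * r - 2"
  unfolding chain_def by (auto; presburger?)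

lemma KK_iff: "x \<in> KK n l r \<longleftrightarrow> x < n \<and> \<not> inR n l r x" unfolding KK_def by simp

lemma card_ge2: assumes "finite A" "x \<in> A" "y \<in> A" "x \<noteq> y" shows "card A \<ge> 2"
proof -
  have "card {x, y} \<le> card A" using assms by (intro card_mono) auto
  then show ?thesis using assms(4) by simp
qed

lemma class1:
  assumes n4: "4 \<le> n" and lr: "2 * l + 2 * r + 4 \<le> n" and w: "w < n" and nc: "\<not> chain n l r w"
    and c1: "card (nbhdC n 1 C w - KK n l r) = 1"
  shows "(w = 2 * l + 2 \<and> 2 * l + 2 < n - 2 * r - 2 \<and> w \<notin> C) \<or>
         (w = n - 2 * r - 2 \<and> 2 * l + 2 < n - 2 * r - 2 \<and> w \<notin> C) \<or>
         (w = 2 * l + 2 \<and> 2 * l + 2 = n - 2 * r - 2 \<and> w \<in> C)"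
proof -
  have fin: "finite (nbhdC n 1 C w - KK n l r)" using nbhdC_finite[OF w] by simp
  have two: False if "x \<in> nbhdC n 1 C w" "y \<in> nbhdC n 1 C w" "x \<noteq> y" "inR n l r x" "inR n l r y" for x y
  proof -
    have "x \<in> nbhdC n 1 C w - KK n l r" "y \<in> nbhdC n 1 C w - KK n l r" using that by (auto simp: KK_iff)
    then have "card (nbhdC n 1 C w - KK n l r) \<ge> 2" using card_ge2[OF fin] that(3) by blast
    then show False using c1 by simp
  qed
  have twoO: False if "x \<in> open_nbhd n 1 w" "y \<in> open_nbhd n 1 w" "x \<noteq> y" "inR n l r x" "inR n l r y" for x y
    using two[of x y] that nbhdC_ge[of n 1 w C] by blast
  have ne: "w - 1 \<noteq> w + 1" by arith
  have gen: "open_nbhd n 1 w = {w - 1, w + 1}" if "0 < w" "w < n - 1"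
    using nb1[OF n4 w] that by simp
  consider (L) "w \<le> 2 * l + 1" | (M) "2 * l + 2 \<le> w \<and> w \<le> n - 2 * r - 2" | (Rt) "n - 2 * r - 1 \<le> w"
    by linarith
  then show ?thesis
  proof cases
    case L
    have o: "odd w" using nc L w unfolding chain_def by auto
    then have w0: "0 < w" by (cases w) auto
    have "open_nbhd n 1 w = {w - 1, w + 1}" using gen w0 L lr by simp
    moreover have "inR n l r (w - 1)" using o L lr w0 unfolding inR_def by auto
    moreover have "inR n l r (w + 1)"
    proof (cases "w = 2 * l + 1")
      case True
      then show ?thesis using lr unfolding inR_def by auto
    next
      case False
      then have "w + 1 \<le> 2 * l" using L o by presburger
      then show ?thesis using o lr unfolding inR_def by auto
    qed
    ultimately have False using twoO[of "w - 1" "w + 1"] ne by auto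
    then show ?thesis ..
  next
    case Rt
    have o: "odd (n - w)"
    proof
      assume "even (n - w)"
      then have "n \<le> w + 2 * r" using Rt w by (auto; presburger)
      then show False using nc \<open>even (n - w)\<close> w unfolding chain_def by auto
    qed
    show ?thesis
    proof (cases "w = n - 1")
      case True
      have "open_nbhd n 1 w = {n - 2, 0}" using nb1[OF n4 w] True n4 by simp
      moreover have "inR n l r 0" unfolding inR_def using n4 by simp
      moreover have "inR n l r (n - 2)" unfolding inR_def using n4 lr by (cases "r = 0") auto
      ultimately have False using twoO[of "n - 2" 0] n4 by auto
      then show ?thesis ..
    next
      case False
      have g2: "open_nbhd n 1 w = {w - 1, w + 1}" using gen False Rt w lr by simp
      have oe: "even (m - 1)" "even (m + 1)" if "odd (m::nat)" for m using that by presburger+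
      have e1: "n - (w + 1) = (n - w) - 1" by arith
      moreover have "inR n l r (w + 1)" unfolding inR_def e1 using oe(1)[OF o] Rt w False by auto
      moreover have "inR n l r (w - 1)"
      proof (cases "w = n - 2 * r - 1")
        case True
        then show ?thesis using lr unfolding inR_def by auto
      next
        case F2: False
        have "n - (w - 1) = (n - w) + 1" using w Rt lr by arith
        moreover have "n \<le> w - 1 + 2 * r" using Rt F2 lr o w by presburger
        ultimately show ?thesis using oe(2)[OF o] w unfolding inR_def by auto
      qed
      ultimately have False using twoO[of "w - 1" "w + 1"] ne g2 by auto
      then show ?thesis ..
    qed
  next
    case M
    have "0 < w" "w < n - 1" using M lr by auto
    then have g: "open_nbhd n 1 w = {w - 1, w + 1}" using gen by simp
    consider (A) "w = 2 * l + 2" | (B) "w = n - 2 * r - 2" "w \<noteq> 2 * l + 2" | (I) "2 * l + 2 < w" "w < n - 2 * r - 2"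
      using M by linarith
    then show ?thesis
    proof cases
      case I
      have "inR n l r (w - 1)" "inR n l r (w + 1)" unfolding inR_def using I by auto
      then have False using twoO[of "w - 1" "w + 1"] g ne by auto
      then show ?thesis ..
    next
      case A
      have k1: "w - 1 \<in> KK n l r" unfolding KK_iff inR_def using A lr by auto
      show ?thesis
      proof (cases "2 * l + 2 = n - 2 * r - 2")
        case True
        have k2: "w + 1 \<in> KK n l r" unfolding KK_iff inR_def using A True lr by auto
        have "w \<in> C"
        proof (rule ccontr)
          assume "w \<notin> C"
          then have emp: "nbhdC n 1 C w - KK n l r = {}" unfolding nbhdC_def using g k1 k2 by auto
          show False using c1 unfolding emp by simp
        qed
        then show ?thesis using A True by simp
      next
        case False
        have "w \<notin> C"
        proof
          assume "w \<in> C"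
          then have "w \<in> nbhdC n 1 C w" "w + 1 \<in> nbhdC n 1 C w" unfolding nbhdC_def closed_nbhd_def using g by auto
          moreover have "inR n l r w" "inR n l r (w + 1)" unfolding inR_def using A False lr M by auto
          ultimately show False using two[of w "w + 1"] by auto
        qed
        then show ?thesis using A False M by auto
      qed
    next
      case B
      have "w \<notin> C"
      proof
        assume "w \<in> C"
        then have "w \<in> nbhdC n 1 C w" "w - 1 \<in> nbhdC n 1 C w" unfolding nbhdC_def closed_nbhd_def using g by auto
        moreover have "inR n l r w" "inR n l r (w - 1)" unfolding inR_def using B lr M by auto
        moreover have "w \<noteq> w - 1" using B M by arith
        ultimately show False using two[of w "w - 1"] by blast
      qed
      then show ?thesis using B M by auto
    qed
  qed
qed

lemma upt_cong: "x = x' \<Longrightarrow> y = y' \<Longrightarrow> [x..<y] = [x'..<y']" by simp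

lemma good_upt: assumes "a + 2 \<le> b"
  shows "good_config C [a..<b+1] = ((a \<notin> C \<and> good_config C [a+2..<b+1]) \<or> (b \<notin> C \<and> good_config C [a..<b-1]))"
proof -
  have "length [a..<b+1] = b + 1 - a" by (rule length_upt)
  then have l: "length [a..<b+1] \<ge> 3" using assms by linarith
  have 1: "hd [a..<b+1] = a" using assms by (simp del: upt_Suc)
  have 2: "drop 2 [a..<b+1] = [a+2..<b+1]" by (simp add: add.commute del: upt_Suc)
  have 3: "last [a..<b+1] = b" using assms by (simp del: upt_Suc)
  have 4: "take (length [a..<b+1] - 2) [a..<b+1] = [a..<b-1]" using assms by (simp add: take_upt del: upt_Suc)
  show ?thesis unfolding good_long[OF l] 1 2 3 4 ..
qed

lemma good_one: "good_config C [a..<a+1] = (a \<in> C)" by simp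
lemma good_two: "good_config C [a..<a+2] = (\<not> (a \<in> C \<and> a + 1 \<in> C))"
proof -
  have "[a..<a+2] = [a, a+1]" by (simp add: upt_rec)
  then show ?thesis by simp
qed

lemma G_nec:
  assumes n4: "4 \<le> n" and lr: "2 * l + 2 * r + 4 \<le> n" and d: "distinct ws" and s: "set ws \<subseteq> {0..<n}"
    and nc: "\<forall>w\<in>set ws. \<not> chain n l r w" and lx: "lext n 1 C (KK n l r) ws"
    and cv: "cover n 1 C (KK n l r) ws = {0..<n}" and len: "length ws = card ({0..<n} - KK n l r)"
  shows "good_config C [2 * l + 2..<n - 2 * r - 1]"
  using lr d s nc lx cv len
proof (induction "n - 2 * l - 2 * r" arbitrary: l r ws rule: less_induct)
  case less
  define a where "a = 2 * l + 2"
  define b where "b = n - 2 * r - 2"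
  have ab: "a \<le> b" "b < n" using less.prems(1) unfolding a_def b_def by auto
  have aR: "a \<in> {0..<n} - KK n l r" unfolding a_def using less.prems(1) by (auto simp: KK_iff inR_def)
  have "card ({0..<n} - KK n l r) \<noteq> 0" using aR by auto
  then obtain w ws' where ws: "ws = w # ws'" using less.prems(7) by (cases ws) auto
  have fs: "card (nbhdC n 1 C w - KK n l r) = 1 \<and> length ws' = card ({0..<n} - (KK n l r \<union> nbhdC n 1 C w))"
    using first_step[OF KK_sub, of "w" ws' n 1 C l r] less.prems unfolding ws by auto
  have w: "w < n" "\<not> chain n l r w" using less.prems(3,4) ws by auto
  have lst: "[2 * l + 2..<n - 2 * r - 1] = [a..<b+1]" unfolding a_def b_def using less.prems(1) by (intro upt_cong) auto
  have nbw: "nbhdC n 1 C w = {w - 1, w + 1}" if "w \<notin> C" "0 < w" "w < n - 1"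
    using nb1[OF n4 w(1)] that unfolding nbhdC_def by simp
  from class1[OF n4 less.prems(1) w(1) w(2) conjunct1[OF fs]]
  consider (A) "w = a" "a < b" "w \<notin> C" | (B) "w = b" "a < b" "w \<notin> C" | (E) "w = a" "a = b" "w \<in> C"
    unfolding a_def b_def by blast
  then show ?case
  proof cases
    case E
    then show ?thesis unfolding lst using good_one[of C a] by simp
  next
    case A
    show ?thesis
    proof (cases "b = a + 1")
      case True
      then show ?thesis unfolding lst using good_two[of C a] A by simp
    next
      case False
      then have lr2: "2 * (l + 1) + 2 * r + 4 \<le> n" using A unfolding a_def b_def by auto
      have K': "KK n l r \<union> nbhdC n 1 C w = KK n (l + 1) r"
      proof -
        have "0 < w" "w < n - 1" using A ab unfolding a_def by auto
        then have N0: "nbhdC n 1 C w = {w - 1, w + 1}" using nbw A by simp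
        have e: "w - 1 = 2 * l + 1" "w + 1 = 2 * l + 3" using A unfolding a_def by auto
        have N: "nbhdC n 1 C w = {2 * l + 1, 2 * l + 3}" using N0 unfolding e .
        have "2 * l + 2 * r + 6 \<le> n" using lr2 by simp
        then show ?thesis unfolding N by (rule KK_step_l)
      qed
      have IH: "good_config C [2 * (l + 1) + 2..<n - 2 * r - 1]"
      proof (rule less.hyps[of "l + 1" r ws'])
        show "n - 2 * (l + 1) - 2 * r < n - 2 * l - 2 * r" using lr2 by simp
        show "2 * (l + 1) + 2 * r + 4 \<le> n" by fact
        show "distinct ws'" using less.prems(2) ws by simp
        show "set ws' \<subseteq> {0..<n}" using less.prems(3) ws by simp
        show "\<forall>w\<in>set ws'. \<not> chain n (l + 1) r w"
          using less.prems(2,4) ws A chain_step_l[of l n r] ab unfolding a_def by auto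
        show "lext n 1 C (KK n (l + 1) r) ws'" using less.prems(5) ws K' by simp
        show "cover n 1 C (KK n (l + 1) r) ws' = {0..<n}" using less.prems(6) ws K' by (simp add: cover_Cons)
        show "length ws' = card ({0..<n} - KK n (l + 1) r)" using fs K' by simp
      qed
      have "[2 * (l + 1) + 2..<n - 2 * r - 1] = [a+2..<b+1]" unfolding a_def b_def using lr2 by (intro upt_cong) auto
      then show ?thesis unfolding lst using good_upt[of a b C] IH A False ab by simp
    qed
  next
    case B
    show ?thesis
    proof (cases "b = a + 1")
      case True
      then show ?thesis unfolding lst using good_two[of C a] B by simp
    next
      case False
      then have lr2: "2 * l + 2 * (r + 1) + 4 \<le> n" using B unfolding a_def b_def by auto
      have K': "KK n l r \<union> nbhdC n 1 C w = KK n l (r + 1)"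
      proof -
        have "0 < w" "w < n - 1" using B ab lr2 unfolding b_def by auto
        then have N0: "nbhdC n 1 C w = {w - 1, w + 1}" using nbw B by simp
        have e: "w - 1 = n - 2 * r - 3" "w + 1 = n - 2 * r - 1" using B lr2 unfolding b_def by auto
        have N: "nbhdC n 1 C w = {n - 2 * r - 3, n - 2 * r - 1}" using N0 unfolding e .
        have "2 * l + 2 * r + 6 \<le> n" using lr2 by simp
        then show ?thesis unfolding N by (rule KK_step_r)
      qed
      have IH: "good_config C [2 * l + 2..<n - 2 * (r + 1) - 1]"
      proof (rule less.hyps[of l "r + 1" ws'])
        show "n - 2 * l - 2 * (r + 1) < n - 2 * l - 2 * r" using lr2 by simp
        show "2 * l + 2 * (r + 1) + 4 \<le> n" by fact
        show "distinct ws'" using less.prems(2) ws by simp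
        show "set ws' \<subseteq> {0..<n}" using less.prems(3) ws by simp
        show "\<forall>w\<in>set ws'. \<not> chain n l (r + 1) w"
          using less.prems(2,4) ws B chain_step_r[of r n l] lr2 unfolding b_def by auto
        show "lext n 1 C (KK n l (r + 1)) ws'" using less.prems(5) ws K' by simp
        show "cover n 1 C (KK n l (r + 1)) ws' = {0..<n}" using less.prems(6) ws K' by (simp add: cover_Cons)
        show "length ws' = card ({0..<n} - KK n l (r + 1))" using fs K' by simp
      qed
      have "[2 * l + 2..<n - 2 * (r + 1) - 1] = [a..<b-1]" unfolding a_def b_def using lr2 by (intro upt_cong) auto
      then show ?thesis unfolding lst using good_upt[of a b C] IH B False ab by simp
    qed
  qed
qed

lemma nbC_sub: assumes "4 \<le> n" "0 < x" "x < n - 1"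
  shows "nbhdC n 1 C x \<subseteq> {x - 1, x, x + 1}" "x - 1 \<in> nbhdC n 1 C x" "x + 1 \<in> nbhdC n 1 C x"
proof -
  have o: "open_nbhd n 1 x = {x - 1, x + 1}" using nb1[OF assms(1), of x] assms by simp
  show "nbhdC n 1 C x \<subseteq> {x - 1, x, x + 1}" using nbhdC_le[of n 1 C x] o unfolding closed_nbhd_def by auto
  show "x - 1 \<in> nbhdC n 1 C x" "x + 1 \<in> nbhdC n 1 C x" using nbhdC_ge[of n 1 x C] o by auto
qed

lemma nbC_last: assumes "4 \<le> n"
  shows "nbhdC n 1 C (n - 1) \<subseteq> {n - 2, n - 1, 0}" "n - 2 \<in> nbhdC n 1 C (n - 1)" "0 \<in> nbhdC n 1 C (n - 1)"
proof -
  have o: "open_nbhd n 1 (n - 1) = {n - 2, 0}" using nb1[OF assms(1), of "n - 1"] assms by simp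
  show "nbhdC n 1 C (n - 1) \<subseteq> {n - 2, n - 1, 0}" using nbhdC_le[of n 1 C "n - 1"] o unfolding closed_nbhd_def by auto
  show "n - 2 \<in> nbhdC n 1 C (n - 1)" "0 \<in> nbhdC n 1 C (n - 1)" using nbhdC_ge[of n 1 "n - 1" C] o by auto
qed

lemma cover_sub: assumes "K \<subseteq> {0..<n}" "set ws \<subseteq> {0..<n}" shows "cover n k C K ws \<subseteq> {0..<n}"
  unfolding cover_def
proof (intro Un_least UN_least)
  show "K \<subseteq> {0..<n}" by fact
  fix w assume "w \<in> set ws"
  then have "w < n" using assms(2) by auto
  then show "nbhdC n k C w \<subseteq> {0..<n}" by (rule nbhdC_sub)
qed

lemma img_lt: "j < m \<Longrightarrow> x = e j \<Longrightarrow> x \<in> e ` {..<m}" by auto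
lemma img_le: "j \<le> m \<Longrightarrow> x = e j \<Longrightarrow> x \<in> e ` {..m}" by auto

lemma base_E:
  assumes n4: "4 \<le> n" and lr: "2 * l + 2 * r + 4 \<le> n" and ab: "2 * l + 2 = n - 2 * r - 2" and aC: "2 * l + 2 \<in> C"
  shows "\<exists>ws. distinct ws \<and> set ws \<subseteq> {0..<n} \<and> (\<forall>w\<in>set ws. \<not> chain n l r w) \<and>
     lext1 n 1 C (KK n l r) ws \<and> cover n 1 C (KK n l r) ws = {0..<n}"
proof -
  define a where "a = 2 * l + 2"
  define K0 where "K0 = KK n l r"
  have an: "0 < a" "a < n - 1" using lr unfolding a_def by auto
  have Na: "nbhdC n 1 C a = {a - 1, a, a + 1}"
    using nbC_sub[OF n4 an, of C] aC unfolding nbhdC_def closed_nbhd_def a_def by auto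
  have am1: "a - 1 \<in> K0" unfolding K0_def KK_iff inR_def a_def using lr by auto
  have ap1: "a + 1 \<in> K0" unfolding K0_def KK_iff inR_def a_def using lr ab by auto
  have aK: "a \<notin> K0" unfolding K0_def KK_iff inR_def a_def using lr ab by auto
  define K1 where "K1 = K0 \<union> {a}"
  have s1: "nbhdC n 1 C a - K0 = {a}" using Na am1 ap1 aK by auto
  have K1': "K0 \<union> nbhdC n 1 C a = K1" unfolding K1_def using Na am1 ap1 by auto
  define cL where "cL = (\<lambda>j::nat. 2 * l + 1 - 2 * j)"
  define eL where "eL = (\<lambda>j::nat. 2 * l - 2 * j)"
  have UL: "lext1 n 1 C K1 (map cL [0..<l+1]) \<and> cover n 1 C K1 (map cL [0..<l+1]) = K1 \<union> eL ` {..<l+1}"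
  proof (rule unwind)
    show "\<forall>j<l + 1. nbhdC n 1 C (cL j) \<subseteq> K1 \<union> eL ` {..j}"
    proof (intro allI impI)
      fix j assume j: "j < l + 1"
      have c: "0 < cL j" "cL j < n - 1" using j lr unfolding cL_def by auto
      have "cL j \<in> K0" unfolding K0_def KK_iff inR_def cL_def using j lr by (auto; presburger?)
      moreover have "cL j - 1 \<in> eL ` {..j}" by (rule img_le[of j]) (auto simp: cL_def eL_def)
      moreover have "cL j + 1 \<in> K1 \<union> eL ` {..j}"
      proof (cases j)
        case 0
        then show ?thesis unfolding K1_def cL_def a_def by simp
      next
        case (Suc j')
        have "cL j + 1 \<in> eL ` {..j}" by (rule img_le[of j']) (use Suc j in \<open>auto simp: cL_def eL_def\<close>)
        then show ?thesis by blast
      qed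
      ultimately show "nbhdC n 1 C (cL j) \<subseteq> K1 \<union> eL ` {..j}" using nbC_sub(1)[OF n4 c, of C] unfolding K1_def by auto
    qed
    show "\<forall>j<l + 1. eL j \<in> nbhdC n 1 C (cL j)"
    proof (intro allI impI)
      fix j assume j: "j < l + 1"
      have c: "0 < cL j" "cL j < n - 1" using j lr unfolding cL_def by auto
      have "eL j = cL j - 1" unfolding eL_def cL_def using j by auto
      then show "eL j \<in> nbhdC n 1 C (cL j)" using nbC_sub(2)[OF n4 c] by simp
    qed
    show "\<forall>j<l + 1. eL j \<notin> K1"
      unfolding K1_def K0_def eL_def a_def using lr by (auto simp: KK_iff inR_def)
    show "\<forall>i j. i < j \<longrightarrow> j < l + 1 \<longrightarrow> eL i \<noteq> eL j" unfolding eL_def by auto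
  qed
  define K2 where "K2 = K1 \<union> eL ` {..<l+1}"
  define cR where "cR = (\<lambda>j::nat. n - 2 * r - 1 + 2 * j)"
  define eR where "eR = (\<lambda>j::nat. n - 2 * r + 2 * j)"
  have UR: "lext1 n 1 C K2 (map cR [0..<r]) \<and> cover n 1 C K2 (map cR [0..<r]) = K2 \<union> eR ` {..<r}"
  proof (rule unwind)
    show "\<forall>j<r. nbhdC n 1 C (cR j) \<subseteq> K2 \<union> eR ` {..j}"
    proof (intro allI impI)
      fix j assume j: "j < r"
      have c: "0 < cR j" "cR j < n - 1" using j lr unfolding cR_def by auto
      have "cR j \<in> K0" unfolding K0_def KK_iff inR_def cR_def using j lr by (auto; presburger?)
      moreover have "cR j + 1 \<in> eR ` {..j}" by (rule img_le[of j]) (use lr in \<open>auto simp: cR_def eR_def\<close>)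
      moreover have "cR j - 1 \<in> K2 \<union> eR ` {..j}"
      proof (cases j)
        case 0
        then have "cR j - 1 = a" unfolding cR_def a_def using ab lr by auto
        then show ?thesis unfolding K2_def K1_def by simp
      next
        case (Suc j')
        have "cR j - 1 \<in> eR ` {..j}" by (rule img_le[of j']) (use Suc j lr in \<open>auto simp: cR_def eR_def\<close>)
        then show ?thesis by blast
      qed
      ultimately show "nbhdC n 1 C (cR j) \<subseteq> K2 \<union> eR ` {..j}" using nbC_sub(1)[OF n4 c, of C] unfolding K2_def K1_def by auto
    qed
    show "\<forall>j<r. eR j \<in> nbhdC n 1 C (cR j)"
    proof (intro allI impI)
      fix j assume j: "j < r"
      have c: "0 < cR j" "cR j < n - 1" using j lr unfolding cR_def by auto
      have "eR j = cR j + 1" unfolding eR_def cR_def using j lr by auto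
      then show "eR j \<in> nbhdC n 1 C (cR j)" using nbC_sub(3)[OF n4 c] by simp
    qed
    show "\<forall>j<r. eR j \<notin> K2"
    proof (intro allI impI)
      fix j assume j: "j < r"
      have "eR j \<notin> K0" unfolding K0_def KK_iff inR_def eR_def using j lr by (auto; presburger?)
      moreover have "eR j \<noteq> a" unfolding eR_def a_def using ab j lr by auto
      moreover have "eR j \<notin> eL ` {..<l+1}" unfolding eR_def eL_def using j lr by auto
      ultimately show "eR j \<notin> K2" unfolding K2_def K1_def by auto
    qed
    show "\<forall>i j. i < j \<longrightarrow> j < r \<longrightarrow> eR i \<noteq> eR j" unfolding eR_def using lr by auto
  qed
  define Ls where "Ls = map cL [0..<l+1]"
  define Rs where "Rs = map cR [0..<r]"
  define ws where "ws = a # Ls @ Rs"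
  have c2: "cover n 1 C K1 Ls = K2" using UL unfolding Ls_def K2_def by simp
  have lx: "lext1 n 1 C K0 ws" unfolding ws_def lext1.simps lext1_append K1' c2 using s1 UL UR
    unfolding Ls_def Rs_def by blast
  have cov: "cover n 1 C K0 ws = K2 \<union> eR ` {..<r}" unfolding ws_def cover_Cons cover_append K1' c2
    using UR unfolding Rs_def by simp
  have full: "K2 \<union> eR ` {..<r} = {0..<n}"
  proof
    show "K2 \<union> eR ` {..<r} \<subseteq> {0..<n}" unfolding K2_def K1_def K0_def using KK_sub lr unfolding a_def eL_def eR_def by auto
  next
    show "{0..<n} \<subseteq> K2 \<union> eR ` {..<r}"
    proof
      fix x assume x: "x \<in> {0..<n}"
      show "x \<in> K2 \<union> eR ` {..<r}"
      proof (cases "inR n l r x")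
        case False
        then show ?thesis using x unfolding K2_def K1_def K0_def by (auto simp: KK_iff)
      next
        case True
        then consider (L) "even x" "x \<le> 2 * l" | (M) "x = a" | (R) "n \<le> x + 2 * r" "even (n - x)" "x < n"
          unfolding inR_def a_def using ab by auto
        then show ?thesis
        proof cases
          case L
          then obtain q where q: "x = 2 * q" by (auto elim: evenE)
          have "x \<in> eL ` {..<l+1}" by (rule img_lt[of "l - q"]) (use L q in \<open>auto simp: eL_def\<close>)
          then show ?thesis unfolding K2_def by blast
        next
          case M
          then show ?thesis unfolding K2_def K1_def by blast
        next
          case R
          obtain q where q: "n - x = 2 * q" using R(2) evenE by blast
          have "q \<ge> 1" "q \<le> r" using q R x by auto
          then have "x \<in> eR ` {..<r}" by (intro img_lt[of "r - q"]) (use q R lr in \<open>auto simp: eR_def\<close>)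
          then show ?thesis by blast
        qed
      qed
    qed
  qed
  have dist: "distinct ws"
  proof -
    have "distinct Ls" unfolding Ls_def distinct_map cL_def by (auto simp: inj_on_def)
    moreover have "distinct Rs" unfolding Rs_def distinct_map cR_def by (auto simp: inj_on_def)
    moreover have "set Ls \<inter> set Rs = {}" unfolding Ls_def Rs_def cL_def cR_def using lr by auto
    moreover have "a \<notin> set Ls" unfolding Ls_def cL_def a_def by auto
    moreover have "a \<notin> set Rs" unfolding Rs_def cR_def a_def using lr ab by auto
    ultimately show ?thesis unfolding ws_def by auto
  qed
  have sub: "set ws \<subseteq> {0..<n}" unfolding ws_def Ls_def Rs_def cL_def cR_def a_def using lr by auto
  have nch: "\<forall>w\<in>set ws. \<not> chain n l r w"
    unfolding ws_def Ls_def Rs_def cL_def cR_def a_def chain_def using lr by (auto; presburger?)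
  have lx': "lext1 n 1 C (KK n l r) ws" using lx unfolding K0_def .
  have cv': "cover n 1 C (KK n l r) ws = {0..<n}" using cov full unfolding K0_def by simp
  show ?thesis by (rule exI[where x = ws]) (intro conjI dist sub nch lx' cv')
qed

lemma base_A:
  assumes n4: "4 \<le> n" and lr: "2 * l + 2 * r + 4 \<le> n" and ab: "2 * l + 3 = n - 2 * r - 2" and aC: "2 * l + 2 \<notin> C"
  shows "\<exists>ws. distinct ws \<and> set ws \<subseteq> {0..<n} \<and> (\<forall>w\<in>set ws. \<not> chain n l r w) \<and>
     lext1 n 1 C (KK n l r) ws \<and> cover n 1 C (KK n l r) ws = {0..<n}"
proof -
  define a where "a = 2 * l + 2"
  define b where "b = 2 * l + 3"
  define K0 where "K0 = KK n l r"
  have an: "0 < a" "a < n - 1" using lr ab unfolding a_def by auto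
  have Na: "nbhdC n 1 C a = {a - 1, b}"
    using nb1[OF n4, of a] an aC unfolding nbhdC_def a_def b_def by auto
  have am1: "a - 1 \<in> K0" unfolding K0_def KK_iff inR_def a_def using lr by auto
  have bK: "b \<notin> K0" unfolding K0_def KK_iff inR_def b_def using lr ab by auto
  define K1 where "K1 = K0 \<union> {b}"
  have s1: "nbhdC n 1 C a - K0 = {b}" using Na am1 bK by auto
  have K1': "K0 \<union> nbhdC n 1 C a = K1" unfolding K1_def using Na am1 by auto
  define cR where "cR = (\<lambda>j::nat. n - 2 * r - 1 + 2 * j)"
  define eR where "eR = (\<lambda>j::nat. if j = r then 0 else n - 2 * r + 2 * j)"
  have UR: "lext1 n 1 C K1 (map cR [0..<r+1]) \<and> cover n 1 C K1 (map cR [0..<r+1]) = K1 \<union> eR ` {..<r+1}"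
  proof (rule unwind)
    show "\<forall>j<r + 1. nbhdC n 1 C (cR j) \<subseteq> K1 \<union> eR ` {..j}"
    proof (intro allI impI)
      fix j assume j: "j < r + 1"
      show "nbhdC n 1 C (cR j) \<subseteq> K1 \<union> eR ` {..j}"
      proof (cases "j = r")
        case True
        have c: "cR j = n - 1" unfolding cR_def True using lr by auto
        have "n - 1 \<in> K0" unfolding K0_def KK_iff inR_def using lr n4 ab by (auto; presburger?)
        moreover have "0 \<in> eR ` {..j}" by (rule img_le[of j]) (auto simp: eR_def True)
        moreover have "n - 2 \<in> K1 \<union> eR ` {..j}"
        proof (cases r)
          case 0
          then have "n - 2 = b" using ab unfolding b_def by auto
          then show ?thesis unfolding K1_def by simp
        next
          case (Suc r')
          have "n - 2 \<in> eR ` {..j}" by (rule img_le[of r']) (use Suc True lr in \<open>auto simp: eR_def\<close>)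
          then show ?thesis by blast
        qed
        ultimately show ?thesis unfolding c using nbC_last(1)[OF n4, of C] unfolding K1_def by auto
      next
        case False
        then have j': "j < r" using j by simp
        have c: "0 < cR j" "cR j < n - 1" using j' lr unfolding cR_def by auto
        have "cR j \<in> K0" unfolding K0_def KK_iff inR_def cR_def using j' lr by (auto; presburger?)
        moreover have "cR j + 1 \<in> eR ` {..j}" by (rule img_le[of j]) (use j' lr in \<open>auto simp: cR_def eR_def\<close>)
        moreover have "cR j - 1 \<in> K1 \<union> eR ` {..j}"
        proof (cases j)
          case 0
          then have "cR j - 1 = b" unfolding cR_def b_def using ab lr by auto
          then show ?thesis unfolding K1_def by simp
        next
          case (Suc j')
          have "cR j - 1 \<in> eR ` {..j}" by (rule img_le[of j']) (use Suc j' lr in \<open>auto simp: cR_def eR_def\<close>)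
          then show ?thesis by blast
        qed
        ultimately show ?thesis using nbC_sub(1)[OF n4 c, of C] unfolding K1_def by auto
      qed
    qed
    show "\<forall>j<r + 1. eR j \<in> nbhdC n 1 C (cR j)"
    proof (intro allI impI)
      fix j assume j: "j < r + 1"
      show "eR j \<in> nbhdC n 1 C (cR j)"
      proof (cases "j = r")
        case True
        have c: "cR j = n - 1" unfolding cR_def True using lr by auto
        show ?thesis unfolding c using nbC_last(3)[OF n4] True by (simp add: eR_def)
      next
        case False
        then have j': "j < r" using j by simp
        have c: "0 < cR j" "cR j < n - 1" using j' lr unfolding cR_def by auto
        have "eR j = cR j + 1" unfolding eR_def cR_def using j' lr by auto
        then show ?thesis using nbC_sub(3)[OF n4 c] by simp
      qed
    qed
    show "\<forall>j<r + 1. eR j \<notin> K1"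
    proof (intro allI impI)
      fix j assume j: "j < r + 1"
      show "eR j \<notin> K1"
      proof (cases "j = r")
        case True
        then show ?thesis unfolding K1_def K0_def eR_def b_def using n4 by (auto simp: KK_iff inR_def)
      next
        case False
        then have j': "j < r" using j by simp
        have "eR j \<notin> K0" unfolding K0_def KK_iff inR_def eR_def using j' lr by (auto; presburger?)
        moreover have "eR j \<noteq> b" unfolding eR_def b_def using ab j' lr by auto
        ultimately show ?thesis unfolding K1_def by auto
      qed
    qed
    show "\<forall>i j. i < j \<longrightarrow> j < r + 1 \<longrightarrow> eR i \<noteq> eR j" unfolding eR_def using lr by auto
  qed
  define K2 where "K2 = K1 \<union> eR ` {..<r+1}"
  define cL where "cL = (\<lambda>j::nat. 2 * j + 1)"
  define eL where "eL = (\<lambda>j::nat. 2 * j + 2)"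
  have UL: "lext1 n 1 C K2 (map cL [0..<l+1]) \<and> cover n 1 C K2 (map cL [0..<l+1]) = K2 \<union> eL ` {..<l+1}"
  proof (rule unwind)
    show "\<forall>j<l + 1. nbhdC n 1 C (cL j) \<subseteq> K2 \<union> eL ` {..j}"
    proof (intro allI impI)
      fix j assume j: "j < l + 1"
      have c: "0 < cL j" "cL j < n - 1" using j lr unfolding cL_def by auto
      have "cL j \<in> K0" unfolding K0_def KK_iff inR_def cL_def using j lr by (auto; presburger?)
      moreover have "cL j + 1 \<in> eL ` {..j}" by (rule img_le[of j]) (auto simp: cL_def eL_def)
      moreover have "cL j - 1 \<in> K2 \<union> eL ` {..j}"
      proof (cases j)
        case 0
        have "0 \<in> eR ` {..<r+1}" by (rule img_lt[of r]) (auto simp: eR_def)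
        then show ?thesis unfolding K2_def cL_def 0 by simp
      next
        case (Suc j')
        have "cL j - 1 \<in> eL ` {..j}" by (rule img_le[of j']) (use Suc in \<open>auto simp: cL_def eL_def\<close>)
        then show ?thesis by blast
      qed
      ultimately show "nbhdC n 1 C (cL j) \<subseteq> K2 \<union> eL ` {..j}" using nbC_sub(1)[OF n4 c, of C] unfolding K2_def K1_def by auto
    qed
    show "\<forall>j<l + 1. eL j \<in> nbhdC n 1 C (cL j)"
    proof (intro allI impI)
      fix j assume j: "j < l + 1"
      have c: "0 < cL j" "cL j < n - 1" using j lr unfolding cL_def by auto
      have "eL j = cL j + 1" unfolding eL_def cL_def by auto
      then show "eL j \<in> nbhdC n 1 C (cL j)" using nbC_sub(3)[OF n4 c] by simp
    qed
    show "\<forall>j<l + 1. eL j \<notin> K2"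
    proof (intro allI impI)
      fix j assume j: "j < l + 1"
      have "eL j \<notin> K0" unfolding K0_def KK_iff inR_def eL_def using j lr ab by auto
      moreover have "eL j \<noteq> b" unfolding eL_def b_def by presburger
      moreover have "eL j \<notin> eR ` {..<r+1}" unfolding eR_def eL_def using j lr ab by auto
      ultimately show "eL j \<notin> K2" unfolding K2_def K1_def by auto
    qed
    show "\<forall>i j. i < j \<longrightarrow> j < l + 1 \<longrightarrow> eL i \<noteq> eL j" unfolding eL_def by auto
  qed
  define Ls where "Ls = map cL [0..<l+1]"
  define Rs where "Rs = map cR [0..<r+1]"
  define ws where "ws = a # Rs @ Ls"
  have c2: "cover n 1 C K1 Rs = K2" using UR unfolding Rs_def K2_def by simp
  have lx: "lext1 n 1 C K0 ws" unfolding ws_def lext1.simps lext1_append K1' c2 using s1 UL UR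
    unfolding Ls_def Rs_def by blast
  have cov: "cover n 1 C K0 ws = K2 \<union> eL ` {..<l+1}" unfolding ws_def cover_Cons cover_append K1' c2
    using UL unfolding Ls_def by simp
  have full: "K2 \<union> eL ` {..<l+1} = {0..<n}"
  proof
    show "K2 \<union> eL ` {..<l+1} \<subseteq> {0..<n}" unfolding K2_def K1_def K0_def using KK_sub lr ab unfolding b_def eL_def eR_def by auto
  next
    show "{0..<n} \<subseteq> K2 \<union> eL ` {..<l+1}"
    proof
      fix x assume x: "x \<in> {0..<n}"
      show "x \<in> K2 \<union> eL ` {..<l+1}"
      proof (cases "inR n l r x")
        case False
        then show ?thesis using x unfolding K2_def K1_def K0_def by (auto simp: KK_iff)
      next
        case True
        have ht: "x \<le> 2 * l + 3 \<Longrightarrow> 2 * l + 2 \<le> x \<Longrightarrow> x = 2 * l + 2 \<or> x = 2 * l + 3" by arith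
        from True consider (L) "even x" "x \<le> 2 * l" | (M) "x = a" | (Mb) "x = b" | (R) "n \<le> x + 2 * r" "even (n - x)" "x < n"
          unfolding inR_def a_def b_def using ab ht by fastforce
        then show ?thesis
        proof cases
          case L
          then obtain q where q: "x = 2 * q" using evenE by blast
          show ?thesis
          proof (cases q)
            case 0
            have "x \<in> eR ` {..<r+1}" by (rule img_lt[of r]) (use q 0 in \<open>auto simp: eR_def\<close>)
            then show ?thesis unfolding K2_def by blast
          next
            case (Suc q')
            have "x \<in> eL ` {..<l+1}" by (rule img_lt[of q']) (use L q Suc in \<open>auto simp: eL_def\<close>)
            then show ?thesis by blast
          qed
        next
          case M
          have "x \<in> eL ` {..<l+1}" by (rule img_lt[of l]) (use M in \<open>auto simp: eL_def a_def\<close>)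
          then show ?thesis by blast
        next
          case Mb
          then show ?thesis unfolding K2_def K1_def by blast
        next
          case R
          obtain q where q: "n - x = 2 * q" using R(2) evenE by blast
          have "q \<ge> 1" "q \<le> r" using q R x by auto
          then have "x \<in> eR ` {..<r+1}" by (intro img_lt[of "r - q"]) (use q R lr in \<open>auto simp: eR_def\<close>)
          then show ?thesis unfolding K2_def by blast
        qed
      qed
    qed
  qed
  have dist: "distinct ws"
  proof -
    have "distinct Ls" unfolding Ls_def distinct_map cL_def by (auto simp: inj_on_def)
    moreover have "distinct Rs" unfolding Rs_def distinct_map cR_def by (auto simp: inj_on_def)
    moreover have "set Rs \<inter> set Ls = {}" unfolding Ls_def Rs_def cL_def cR_def using lr ab by auto
    moreover have "a \<notin> set Ls" unfolding Ls_def cL_def a_def by (auto; presburger?)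
    moreover have "a \<notin> set Rs" unfolding Rs_def cR_def a_def using lr ab by auto
    ultimately show ?thesis unfolding ws_def by auto
  qed
  have sub: "set ws \<subseteq> {0..<n}" unfolding ws_def Ls_def Rs_def cL_def cR_def a_def using lr ab by auto
  have nch: "\<forall>w\<in>set ws. \<not> chain n l r w"
    unfolding ws_def Ls_def Rs_def cL_def cR_def a_def chain_def using lr ab by (auto; presburger?)
  have lx': "lext1 n 1 C (KK n l r) ws" using lx unfolding K0_def .
  have cv': "cover n 1 C (KK n l r) ws = {0..<n}" using cov full unfolding K0_def by simp
  show ?thesis by (rule exI[where x = ws]) (intro conjI dist sub nch lx' cv')
qed

lemma base_B:
  assumes n4: "4 \<le> n" and lr: "2 * l + 2 * r + 4 \<le> n" and ab: "2 * l + 3 = n - 2 * r - 2" and bC: "2 * l + 3 \<notin> C"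
  shows "\<exists>ws. distinct ws \<and> set ws \<subseteq> {0..<n} \<and> (\<forall>w\<in>set ws. \<not> chain n l r w) \<and>
     lext1 n 1 C (KK n l r) ws \<and> cover n 1 C (KK n l r) ws = {0..<n}"
proof -
  define a where "a = 2 * l + 2"
  define b where "b = 2 * l + 3"
  define K0 where "K0 = KK n l r"
  have bn: "0 < b" "b < n - 1" using lr ab unfolding b_def by auto
  have Nb: "nbhdC n 1 C b = {a, b + 1}"
    using nb1[OF n4, of b] bn bC unfolding nbhdC_def a_def b_def by auto
  have bp1: "b + 1 \<in> K0" unfolding K0_def KK_iff inR_def b_def using lr ab by auto
  have aK: "a \<notin> K0" unfolding K0_def KK_iff inR_def a_def using lr ab by auto
  define K1 where "K1 = K0 \<union> {a}"
  have s1: "nbhdC n 1 C b - K0 = {a}" using Nb bp1 aK by auto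
  have K1': "K0 \<union> nbhdC n 1 C b = K1" unfolding K1_def using Nb bp1 by auto
  define cL where "cL = (\<lambda>j::nat. 2 * l + 1 - 2 * j)"
  define eL where "eL = (\<lambda>j::nat. 2 * l - 2 * j)"
  have UL: "lext1 n 1 C K1 (map cL [0..<l+1]) \<and> cover n 1 C K1 (map cL [0..<l+1]) = K1 \<union> eL ` {..<l+1}"
  proof (rule unwind)
    show "\<forall>j<l + 1. nbhdC n 1 C (cL j) \<subseteq> K1 \<union> eL ` {..j}"
    proof (intro allI impI)
      fix j assume j: "j < l + 1"
      have c: "0 < cL j" "cL j < n - 1" using j lr unfolding cL_def by auto
      have "cL j \<in> K0" unfolding K0_def KK_iff inR_def cL_def using j lr by (auto; presburger?)
      moreover have "cL j - 1 \<in> eL ` {..j}" by (rule img_le[of j]) (auto simp: cL_def eL_def)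
      moreover have "cL j + 1 \<in> K1 \<union> eL ` {..j}"
      proof (cases j)
        case 0
        then show ?thesis unfolding K1_def cL_def a_def by simp
      next
        case (Suc j')
        have "cL j + 1 \<in> eL ` {..j}" by (rule img_le[of j']) (use Suc j in \<open>auto simp: cL_def eL_def\<close>)
        then show ?thesis by blast
      qed
      ultimately show "nbhdC n 1 C (cL j) \<subseteq> K1 \<union> eL ` {..j}" using nbC_sub(1)[OF n4 c, of C] unfolding K1_def by auto
    qed
    show "\<forall>j<l + 1. eL j \<in> nbhdC n 1 C (cL j)"
    proof (intro allI impI)
      fix j assume j: "j < l + 1"
      have c: "0 < cL j" "cL j < n - 1" using j lr unfolding cL_def by auto
      have "eL j = cL j - 1" unfolding eL_def cL_def using j by auto
      then show "eL j \<in> nbhdC n 1 C (cL j)" using nbC_sub(2)[OF n4 c] by simp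
    qed
    show "\<forall>j<l + 1. eL j \<notin> K1"
      unfolding K1_def K0_def eL_def a_def using lr by (auto simp: KK_iff inR_def)
    show "\<forall>i j. i < j \<longrightarrow> j < l + 1 \<longrightarrow> eL i \<noteq> eL j" unfolding eL_def by auto
  qed
  define K2 where "K2 = K1 \<union> eL ` {..<l+1}"
  define cR where "cR = (\<lambda>j::nat. n - 1 - 2 * j)"
  define eR where "eR = (\<lambda>j::nat. n - 2 - 2 * j)"
  have UR: "lext1 n 1 C K2 (map cR [0..<r+1]) \<and> cover n 1 C K2 (map cR [0..<r+1]) = K2 \<union> eR ` {..<r+1}"
  proof (rule unwind)
    show "\<forall>j<r + 1. nbhdC n 1 C (cR j) \<subseteq> K2 \<union> eR ` {..j}"
    proof (intro allI impI)
      fix j assume j: "j < r + 1"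
      show "nbhdC n 1 C (cR j) \<subseteq> K2 \<union> eR ` {..j}"
      proof (cases j)
        case 0
        have c: "cR j = n - 1" unfolding cR_def 0 by simp
        have "n - 1 \<in> K0" unfolding K0_def KK_iff inR_def using lr n4 ab by (auto; presburger?)
        moreover have "n - 2 \<in> eR ` {..j}" by (rule img_le[of 0]) (auto simp: eR_def 0)
        moreover have "0 \<in> K2" unfolding K2_def
        proof -
          have "0 \<in> eL ` {..<l+1}" by (rule img_lt[of l]) (auto simp: eL_def)
          then show "0 \<in> K1 \<union> eL ` {..<l+1}" by blast
        qed
        ultimately show ?thesis unfolding c using nbC_last(1)[OF n4, of C] unfolding K2_def K1_def by auto
      next
        case (Suc j')
        have c: "0 < cR j" "cR j < n - 1" using j lr Suc unfolding cR_def by auto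
        have "cR j \<in> K0" unfolding K0_def KK_iff inR_def cR_def using j lr Suc by (auto; presburger?)
        moreover have "cR j - 1 \<in> eR ` {..j}" by (rule img_le[of j]) (use j lr in \<open>auto simp: cR_def eR_def\<close>)
        moreover have "cR j + 1 \<in> eR ` {..j}" by (rule img_le[of j']) (use Suc j lr in \<open>auto simp: cR_def eR_def\<close>)
        ultimately show ?thesis using nbC_sub(1)[OF n4 c, of C] unfolding K2_def K1_def by auto
      qed
    qed
    show "\<forall>j<r + 1. eR j \<in> nbhdC n 1 C (cR j)"
    proof (intro allI impI)
      fix j assume j: "j < r + 1"
      show "eR j \<in> nbhdC n 1 C (cR j)"
      proof (cases j)
        case 0
        show ?thesis unfolding 0 cR_def eR_def using nbC_last(2)[OF n4] by simp
      next
        case (Suc j')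
        have c: "0 < cR j" "cR j < n - 1" using j lr Suc unfolding cR_def by auto
        have "eR j = cR j - 1" unfolding eR_def cR_def using j lr by auto
        then show ?thesis using nbC_sub(2)[OF n4 c] by simp
      qed
    qed
    show "\<forall>j<r + 1. eR j \<notin> K2"
    proof (intro allI impI)
      fix j assume j: "j < r + 1"
      have "inR n l r (eR j)"
      proof (cases "j = r")
        case True
        then show ?thesis unfolding inR_def eR_def using ab lr by auto
      next
        case False
        have "n - eR j = 2 * (j + 1)" "n \<le> eR j + 2 * r" "eR j < n" unfolding eR_def using j False lr by auto
        then show ?thesis unfolding inR_def by simp
      qed
      then have "eR j \<notin> K0" unfolding K0_def KK_iff by simp
      moreover have "eR j \<noteq> a" unfolding eR_def a_def using ab j lr by auto
      moreover have "eR j \<notin> eL ` {..<l+1}" unfolding eR_def eL_def using j lr ab by auto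
      ultimately show "eR j \<notin> K2" unfolding K2_def K1_def by auto
    qed
    show "\<forall>i j. i < j \<longrightarrow> j < r + 1 \<longrightarrow> eR i \<noteq> eR j" unfolding eR_def using lr by auto
  qed
  define Ls where "Ls = map cL [0..<l+1]"
  define Rs where "Rs = map cR [0..<r+1]"
  define ws where "ws = b # Ls @ Rs"
  have c2: "cover n 1 C K1 Ls = K2" using UL unfolding Ls_def K2_def by simp
  have lx: "lext1 n 1 C K0 ws" unfolding ws_def lext1.simps lext1_append K1' c2 using s1 UL UR
    unfolding Ls_def Rs_def by blast
  have cov: "cover n 1 C K0 ws = K2 \<union> eR ` {..<r+1}" unfolding ws_def cover_Cons cover_append K1' c2
    using UR unfolding Rs_def by simp
  have full: "K2 \<union> eR ` {..<r+1} = {0..<n}"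
  proof
    show "K2 \<union> eR ` {..<r+1} \<subseteq> {0..<n}" unfolding K2_def K1_def K0_def using KK_sub lr unfolding a_def eL_def eR_def by auto
  next
    show "{0..<n} \<subseteq> K2 \<union> eR ` {..<r+1}"
    proof
      fix x assume x: "x \<in> {0..<n}"
      show "x \<in> K2 \<union> eR ` {..<r+1}"
      proof (cases "inR n l r x")
        case False
        then show ?thesis using x unfolding K2_def K1_def K0_def by (auto simp: KK_iff)
      next
        case True
        have ht: "x \<le> 2 * l + 3 \<Longrightarrow> 2 * l + 2 \<le> x \<Longrightarrow> x = 2 * l + 2 \<or> x = 2 * l + 3" by arith
        from True consider (L) "even x" "x \<le> 2 * l" | (M) "x = a" | (Mb) "x = b" | (R) "n \<le> x + 2 * r" "even (n - x)" "x < n"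
          unfolding inR_def a_def b_def using ab ht by fastforce
        then show ?thesis
        proof cases
          case L
          then obtain q where q: "x = 2 * q" using evenE by blast
          have "x \<in> eL ` {..<l+1}" by (rule img_lt[of "l - q"]) (use L q in \<open>auto simp: eL_def\<close>)
          then show ?thesis unfolding K2_def by blast
        next
          case M
          then show ?thesis unfolding K2_def K1_def by blast
        next
          case Mb
          have "x \<in> eR ` {..<r+1}" by (rule img_lt[of r]) (use Mb ab in \<open>auto simp: eR_def b_def\<close>)
          then show ?thesis by blast
        next
          case R
          obtain q where q: "n - x = 2 * q" using R(2) evenE by blast
          have "q \<ge> 1" "q \<le> r" using q R x by auto
          then have "x \<in> eR ` {..<r+1}" by (intro img_lt[of "q - 1"]) (use q R lr in \<open>auto simp: eR_def\<close>)
          then show ?thesis by blast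
        qed
      qed
    qed
  qed
  have dist: "distinct ws"
  proof -
    have "distinct Ls" unfolding Ls_def distinct_map cL_def by (auto simp: inj_on_def)
    moreover have "distinct Rs" unfolding Rs_def distinct_map cR_def using lr by (auto simp: inj_on_def)
    moreover have "set Ls \<inter> set Rs = {}" unfolding Ls_def Rs_def cL_def cR_def using lr ab by auto
    moreover have "b \<notin> set Ls" unfolding Ls_def cL_def b_def by auto
    moreover have "b \<notin> set Rs" unfolding Rs_def cR_def b_def using lr ab by (auto; presburger?)
    ultimately show ?thesis unfolding ws_def by auto
  qed
  have sub: "set ws \<subseteq> {0..<n}" unfolding ws_def Ls_def Rs_def cL_def cR_def b_def using lr ab by auto
  have nch: "\<forall>w\<in>set ws. \<not> chain n l r w"
    unfolding ws_def Ls_def Rs_def cL_def cR_def b_def chain_def using lr ab by (auto; presburger?)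
  have lx': "lext1 n 1 C (KK n l r) ws" using lx unfolding K0_def .
  have cv': "cover n 1 C (KK n l r) ws = {0..<n}" using cov full unfolding K0_def by simp
  show ?thesis by (rule exI[where x = ws]) (intro conjI dist sub nch lx' cv')
qed

lemma G_suf:
  assumes n4: "4 \<le> n" and lr: "2 * l + 2 * r + 4 \<le> n" and gd: "good_config C [2 * l + 2..<n - 2 * r - 1]"
  shows "\<exists>ws. distinct ws \<and> set ws \<subseteq> {0..<n} \<and> (\<forall>w\<in>set ws. \<not> chain n l r w) \<and>
     lext1 n 1 C (KK n l r) ws \<and> cover n 1 C (KK n l r) ws = {0..<n}"
  using lr gd
proof (induction "n - 2 * l - 2 * r" arbitrary: l r rule: less_induct)
  case less
  define a where "a = 2 * l + 2"
  define b where "b = n - 2 * r - 2"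
  have ab: "a \<le> b" "b < n" using less.prems(1) unfolding a_def b_def by auto
  have lst: "[2 * l + 2..<n - 2 * r - 1] = [a..<b+1]" unfolding a_def b_def using less.prems(1) by (intro upt_cong) auto
  have g: "good_config C [a..<b+1]" using less.prems(2) lst by simp
  consider (E) "b = a" | (T) "b = a + 1" | (G) "a + 2 \<le> b" using ab by linarith
  then show ?case
  proof cases
    case E
    then have "a \<in> C" using g good_one[of C a] by simp
    then show ?thesis using base_E[OF n4 less.prems(1)] E unfolding a_def b_def by simp
  next
    case T
    have "[a..<b+1] = [a..<a+2]" using T by simp
    then have "\<not> (a \<in> C \<and> a + 1 \<in> C)" using g good_two[of C a] by simp
    moreover have "a + 1 = 2 * l + 3" "a = 2 * l + 2" unfolding a_def by arith+
    ultimately have "2 * l + 2 \<notin> C \<or> 2 * l + 3 \<notin> C" by metis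
    have ab3: "2 * l + 3 = n - 2 * r - 2" using T unfolding a_def b_def by simp
    from \<open>2 * l + 2 \<notin> C \<or> 2 * l + 3 \<notin> C\<close> show ?thesis
    proof
      assume "2 * l + 2 \<notin> C"
      then show ?thesis by (rule base_A[OF n4 less.prems(1) ab3])
    next
      assume "2 * l + 3 \<notin> C"
      then show ?thesis by (rule base_B[OF n4 less.prems(1) ab3])
    qed
  next
    case G
    have lr2: "2 * l + 2 * r + 6 \<le> n" using G unfolding a_def b_def by auto
    have an: "0 < a" "a < n - 1" "0 < b" "b < n - 1" using G ab unfolding a_def b_def by auto
    have "(a \<notin> C \<and> good_config C [a+2..<b+1]) \<or> (b \<notin> C \<and> good_config C [a..<b-1])"
      using g good_upt[OF G] by simp
    then show ?thesis
    proof
      assume A: "a \<notin> C \<and> good_config C [a+2..<b+1]"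
      have "[2 * (l + 1) + 2..<n - 2 * r - 1] = [a+2..<b+1]" unfolding a_def b_def using lr2 by (intro upt_cong) auto
      then have g2: "good_config C [2 * (l + 1) + 2..<n - 2 * r - 1]" using A by simp
      obtain ws' where ws': "distinct ws'" "set ws' \<subseteq> {0..<n}" "\<forall>w\<in>set ws'. \<not> chain n (l + 1) r w"
        "lext1 n 1 C (KK n (l + 1) r) ws'" "cover n 1 C (KK n (l + 1) r) ws' = {0..<n}"
      proof -
        have lt: "n - 2 * (l + 1) - 2 * r < n - 2 * l - 2 * r" using lr2 by simp
        have "2 * (l + 1) + 2 * r + 4 \<le> n" using lr2 by simp
        from less.hyps[OF lt this g2] show ?thesis using that by blast
      qed
      have N0: "nbhdC n 1 C a = {a - 1, a + 1}" using nb1[OF n4, of a] an A unfolding nbhdC_def by auto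
      have e: "a - 1 = 2 * l + 1" "a + 1 = 2 * l + 3" unfolding a_def by auto
      have N: "nbhdC n 1 C a = {2 * l + 1, 2 * l + 3}" using N0 unfolding e .
      have K': "KK n l r \<union> nbhdC n 1 C a = KK n (l + 1) r" unfolding N using lr2 by (rule KK_step_l)
      have s1: "nbhdC n 1 C a - KK n l r = {2 * l + 3}"
      proof -
        have "2 * l + 1 \<in> KK n l r" unfolding KK_iff inR_def using lr2 by auto
        moreover have "2 * l + 3 \<notin> KK n l r" unfolding KK_iff inR_def using lr2 by auto
        ultimately show ?thesis unfolding N by auto
      qed
      have ca: "chain n (l + 1) r a" using chain_step_l[of l n r a] lr2 unfolding a_def by simp
      have nca: "\<not> chain n l r a" unfolding chain_def a_def using lr2 by auto
      have nc: "\<forall>w\<in>set (a # ws'). \<not> chain n l r w" using ws'(3) nca chain_step_l[of l n r] lr2 by auto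
      have "lext1 n 1 C (KK n l r) (a # ws')" using s1 K' ws'(4) by simp
      moreover have "cover n 1 C (KK n l r) (a # ws') = {0..<n}" using K' ws'(5) by (simp add: cover_Cons)
      moreover have "distinct (a # ws')" using ws'(1,3) ca by auto
      moreover have "set (a # ws') \<subseteq> {0..<n}" using ws'(2) ab by auto
      ultimately show ?thesis using nc by blast
    next
      assume B: "b \<notin> C \<and> good_config C [a..<b-1]"
      have "[2 * l + 2..<n - 2 * (r + 1) - 1] = [a..<b-1]" unfolding a_def b_def using lr2 by (intro upt_cong) auto
      then have g2: "good_config C [2 * l + 2..<n - 2 * (r + 1) - 1]" using B by simp
      obtain ws' where ws': "distinct ws'" "set ws' \<subseteq> {0..<n}" "\<forall>w\<in>set ws'. \<not> chain n l (r + 1) w"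
        "lext1 n 1 C (KK n l (r + 1)) ws'" "cover n 1 C (KK n l (r + 1)) ws' = {0..<n}"
      proof -
        have lt: "n - 2 * l - 2 * (r + 1) < n - 2 * l - 2 * r" using lr2 by simp
        have "2 * l + 2 * (r + 1) + 4 \<le> n" using lr2 by simp
        from less.hyps[OF lt this g2] show ?thesis using that by blast
      qed
      have N0: "nbhdC n 1 C b = {b - 1, b + 1}" using nb1[OF n4, of b] an B unfolding nbhdC_def by auto
      have e: "b - 1 = n - 2 * r - 3" "b + 1 = n - 2 * r - 1" unfolding b_def using lr2 by auto
      have N: "nbhdC n 1 C b = {n - 2 * r - 3, n - 2 * r - 1}" using N0 unfolding e .
      have K': "KK n l r \<union> nbhdC n 1 C b = KK n l (r + 1)" unfolding N using lr2 by (rule KK_step_r)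
      have s1: "nbhdC n 1 C b - KK n l r = {n - 2 * r - 3}"
      proof -
        have "n - 2 * r - 1 \<in> KK n l r" unfolding KK_iff inR_def using lr2 by (auto; presburger?)
        moreover have "n - 2 * r - 3 \<notin> KK n l r" unfolding KK_iff inR_def using lr2 by auto
        ultimately show ?thesis unfolding N by auto
      qed
      have cb: "chain n l (r + 1) b" using chain_step_r[of r n l b] lr2 unfolding b_def by simp
      have ncb: "\<not> chain n l r b" unfolding chain_def b_def using lr2 by auto
      have nc: "\<forall>w\<in>set (b # ws'). \<not> chain n l r w" using ws'(3) ncb chain_step_r[of r n l] lr2 by auto
      have "lext1 n 1 C (KK n l r) (b # ws')" using s1 K' ws'(4) by simp
      moreover have "cover n 1 C (KK n l r) (b # ws') = {0..<n}" using K' ws'(5) by (simp add: cover_Cons)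
      moreover have "distinct (b # ws')" using ws'(1,3) cb by auto
      moreover have "set (b # ws') \<subseteq> {0..<n}" using ws'(2) ab by auto
      ultimately show ?thesis using nc by blast
    qed
  qed
qed

lemma diff_ne: "x \<in> A \<Longrightarrow> x \<notin> B \<Longrightarrow> A - B \<noteq> {}" by auto

lemma adjI: "u < n \<Longrightarrow> v < n \<Longrightarrow> u \<noteq> v \<Longrightarrow> (if u \<le> v then v - u else u - v) \<le> k \<Longrightarrow> web_adj n k u v"
  unfolding adj_def2 by (auto split: if_splits)

lemma inN: "web_adj n k w x \<Longrightarrow> x \<in> nbhdC n k C w"
  using nbhdC_ge[of n k w C] by (auto simp: open_iff)

lemma Vminus_closed0: assumes "2 * k < n" shows "{0..<n} - closed_nbhd n k 0 = {k+1..<n-k}"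
proof -
  have "x \<in> {0..<n} - closed_nbhd n k 0 \<longleftrightarrow> x \<in> {k+1..<n-k}" for x
    unfolding closed_nbhd_def open0[OF assms] using assms by (simp; linarith)
  then show ?thesis by blast
qed

lemma card_V_K0: assumes "2 * k < n" shows "card ({0..<n} - open_nbhd n k 0) = n - 2 * k"
proof -
  have fo: "finite (open_nbhd n k 0)" by (rule finite_subset[OF open_sub]) simp
  have "card ({0..<n} - open_nbhd n k 0) = card {0..<n} - card (open_nbhd n k 0)"
    by (rule card_Diff_subset[OF fo open_sub])
  then show ?thesis using card_open0[OF assms] by simp
qed

lemma Z_nec_k2: assumes k2: "k \<ge> 2" and n: "2 * k + 2 \<le> n" and C0: "0 \<notin> C"
  and ws: "set (w # ws) \<subseteq> {0..<n}" "0 \<notin> set (w # ws)" "lext n k C (open_nbhd n k 0) (w # ws)"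
     "cover n k C (open_nbhd n k 0) (w # ws) = {0..<n}" "length (w # ws) = n - 2 * k"
  shows "n \<le> 2 * k + 3 \<and> good_config C [k+1..<n-k]"
proof -
  define K0 where "K0 = open_nbhd n k 0"
  have K0: "K0 = {1..k} \<union> {n-k..<n}" unfolding K0_def using open0[of k n] n by simp
  have w: "w < n" "w \<noteq> 0" using ws by auto
  have c1: "card (nbhdC n k C w - K0) = 1"
    using first_step[OF open_sub ws(1) ws(3) ws(4)] ws(5) card_V_K0[of k n] n unfolding K0_def by simp
  have fin: "finite (nbhdC n k C w - K0)" using nbhdC_finite[OF w(1)] by simp
  have two: False if "x \<in> nbhdC n k C w" "y \<in> nbhdC n k C w" "x \<noteq> y" "x \<notin> K0" "y \<notin> K0" for x y
  proof -
    have "card (nbhdC n k C w - K0) \<ge> 2" using card_ge2[OF fin, of x y] that by blast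
    then show False using c1 by simp
  qed
  have twoA: False if "web_adj n k w x" "web_adj n k w y" "x \<noteq> y" "x \<notin> K0" "y \<notin> K0" for x y
    using two[of x y] inN[OF that(1)] inN[OF that(2)] that(3-5) by blast
  have lowK: False if "w \<le> k"
  proof -
    have "web_adj n k w 0" "web_adj n k w (k + 1)" using that w n unfolding adj_def2 by auto
    moreover have "0 \<notin> K0" "k + 1 \<notin> K0" unfolding K0 using n by auto
    ultimately show False using twoA[of 0 "k + 1"] by simp
  qed
  have highK: False if "n - k \<le> w"
  proof -
    have "web_adj n k w 0" "web_adj n k w (n - k - 1)" using that w n unfolding adj_def2 by auto
    moreover have "0 \<notin> K0" "n - k - 1 \<notin> K0" unfolding K0 using n by auto
    moreover have "(0::nat) \<noteq> n - k - 1" using n by simp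
    ultimately show False using twoA[of 0 "n - k - 1"] by blast
  qed
  have m1: "\<not> w \<le> k" using lowK by blast
  have m2: "\<not> n - k \<le> w" using highK by blast
  have mid: "k + 1 \<le> w \<and> w \<le> n - k - 1" using m1 m2 w n by linarith
  have n3: "n \<le> 2 * k + 3"
  proof (rule ccontr)
    assume "\<not> n \<le> 2 * k + 3"
    then have n4: "2 * k + 4 \<le> n" by simp
    consider (a) "w = k + 1" | (b) "k + 2 \<le> w" "w \<le> n - k - 2" | (c) "w = n - k - 1" using mid by linarith
    then show False
    proof cases
      case a
      have "web_adj n k w (k + 2)" "web_adj n k w (k + 3)" using a n4 k2 unfolding adj_def2 by auto
      moreover have "k + 2 \<notin> K0" "k + 3 \<notin> K0" unfolding K0 using n4 by auto
      ultimately show False using twoA[of "k + 2" "k + 3"] by simp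
    next
      case b
      have "web_adj n k w (w - 1)" "web_adj n k w (w + 1)" using b n4 k2 unfolding adj_def2 by auto
      moreover have "w - 1 \<notin> K0" "w + 1 \<notin> K0" unfolding K0 using n4 b by auto
      moreover have "w - 1 \<noteq> w + 1" by arith
      ultimately show False using twoA[of "w - 1" "w + 1"] by blast
    next
      case c
      have "web_adj n k w (w - 1)" "web_adj n k w (w - 2)" using c n4 k2 unfolding adj_def2 by auto
      moreover have "w - 1 \<notin> K0" "w - 2 \<notin> K0" unfolding K0 using n4 c by auto
      moreover have "w - 1 \<noteq> w - 2" using c n4 by arith
      ultimately show False using twoA[of "w - 1" "w - 2"] by blast
    qed
  qed
  show ?thesis
  proof (cases "n = 2 * k + 2")
    case True
    have L: "[k+1..<n-k] = [k+1]" using True by simp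
    have "k + 1 \<in> C"
    proof (rule ccontr)
      assume nC: "k + 1 \<notin> C"
      have wk: "w = k + 1" using mid True by simp
      have "nbhdC n k C w \<subseteq> K0"
      proof
        fix x assume "x \<in> nbhdC n k C w"
        then have "web_adj n k (k + 1) x" using nC wk unfolding nbhdC_def by (simp add: open_iff)
        then show "x \<in> K0" unfolding K0 adj_def2 using True by auto
      qed
      then have emp: "nbhdC n k C w - K0 = {}" by auto
      show False using c1 unfolding emp by simp
    qed
    then show ?thesis using L n3 by simp
  next
    case False
    then have T: "n = 2 * k + 3" using n3 n by simp
    have L: "[k+1..<n-k] = [k+1, k+2]" using T by (simp add: upt_rec)
    have "\<not> (k + 1 \<in> C \<and> k + 2 \<in> C)"
    proof
      assume both: "k + 1 \<in> C \<and> k + 2 \<in> C"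
      consider (a) "w = k + 1" | (b) "w = k + 2" using mid T by linarith
      then show False
      proof cases
        case a
        have "k + 1 \<in> nbhdC n k C w" using both a unfolding nbhdC_def closed_nbhd_def by simp
        moreover have "web_adj n k w (k + 2)" using a T k2 unfolding adj_def2 by auto
        moreover have "k + 1 \<notin> K0" "k + 2 \<notin> K0" unfolding K0 using T by auto
        ultimately show False using two[of "k + 1" "k + 2"] inN[of n k w "k + 2" C] by auto
      next
        case b
        have "k + 2 \<in> nbhdC n k C w" using both b unfolding nbhdC_def closed_nbhd_def by simp
        moreover have "web_adj n k w (k + 1)" using b T k2 unfolding adj_def2 by auto
        moreover have "k + 1 \<notin> K0" "k + 2 \<notin> K0" unfolding K0 using T by auto
        ultimately show False using two[of "k + 2" "k + 1"] inN[of n k w "k + 1" C] by auto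
      qed
    qed
    then show ?thesis using L n3 by simp
  qed
qed

lemma notN: "x \<noteq> v \<Longrightarrow> \<not> web_adj n k v x \<Longrightarrow> x \<notin> nbhdC n k C v"
  using nbhdC_le[of n k C v] by (auto simp: closed_iff)

lemma notN_open: "v \<notin> C \<Longrightarrow> \<not> web_adj n k v x \<Longrightarrow> x \<notin> nbhdC n k C v"
  unfolding nbhdC_def by (simp add: open_iff)

lemma K0_eq: "2 * k < n \<Longrightarrow> x \<in> open_nbhd n k 0 \<longleftrightarrow> (1 \<le> x \<and> x \<le> k) \<or> (n - k \<le> x \<and> x < n)"
  using open0[of k n] by auto

lemma Z_nec: assumes k1: "k \<ge> 1" and n: "2 * k + 2 \<le> n" and CV: "C \<subseteq> {0..<n}" and C0: "0 \<notin> C"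
  and L: "legal_seq n k C (0 # ws)" and D: "dominating_seq n k C (0 # ws)" and len: "length ws = n - 2 * k"
shows "(k = 1 \<or> n \<le> 2 * k + 3) \<and> good_config C [k+1..<n-k]"
proof -
  have N0: "nbhdC n k C 0 = open_nbhd n k 0" using C0 unfolding nbhdC_def by simp
  have l: "distinct (0 # ws)" "set (0 # ws) \<subseteq> {0..<n}" "lext n k C (open_nbhd n k 0) ws"
    using L unfolding legal_cons N0 by auto
  have c: "cover n k C (open_nbhd n k 0) ws = {0..<n}" using D unfolding dom_cons N0 .
  show ?thesis
  proof (cases "k = 1")
    case True
    have n4: "4 \<le> n" using n True by simp
    have K: "KK n 0 0 = open_nbhd n 1 0" using KK00[OF n4] .
    have g: "good_config C [2 * 0 + 2..<n - 2 * 0 - 1]"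
    proof (rule G_nec[OF n4, of 0 0 ws])
      show "2 * 0 + 2 * 0 + 4 \<le> n" using n4 by simp
      show "distinct ws" using l(1) by simp
      show "set ws \<subseteq> {0..<n}" using l(2) by simp
      show "\<forall>w\<in>set ws. \<not> chain n 0 0 w"
      proof
        fix w assume "w \<in> set ws"
        then have "w \<noteq> 0" using l(1) by (intro notI) auto
        then show "\<not> chain n 0 0 w" by (simp add: chain00)
      qed
      show "lext n 1 C (KK n 0 0) ws" using l(3) True K by simp
      show "cover n 1 C (KK n 0 0) ws = {0..<n}" using c True K by simp
      show "length ws = card ({0..<n} - KK n 0 0)" using len True K card_V_K0[of 1 n] n4 by simp
    qed
    have "[2 * 0 + 2..<n - 2 * 0 - 1] = [k+1..<n-k]" using True by simp
    then show ?thesis using g True by simp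
  next
    case False
    then have k2: "k \<ge> 2" using k1 by simp
    obtain w ws' where ws: "ws = w # ws'" using len n by (cases ws) auto
    show ?thesis using Z_nec_k2[OF k2 n C0, of w ws'] l c len unfolding ws by auto
  qed
qed

lemma Z_suf_k2: assumes k1: "k \<ge> 1" and n: "2 * k + 2 \<le> n" "n \<le> 2 * k + 3" and C0: "0 \<notin> C"
  and g: "good_config C [k+1..<n-k]"
shows "\<exists>ws. legal_seq n k C (0 # ws) \<and> dominating_seq n k C (0 # ws) \<and> length ws = n - 2 * k"
proof -
  have N0: "nbhdC n k C 0 = open_nbhd n k 0" using C0 unfolding nbhdC_def by simp
  have nk: "2 * k < n" using n by simp
  note K0 = K0_eq[OF nk]
  show ?thesis
  proof (cases "n = 2 * k + 2")
    case True
    have "[k+1..<n-k] = [k+1]" using True by simp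
    then have kC: "k + 1 \<in> C" using g by simp
    define ws where "ws = [k + 1, 1]"
    have a1: "k + 1 \<in> nbhdC n k C (k + 1)" using kC unfolding nbhdC_def closed_nbhd_def by simp
    have a2: "0 \<in> nbhdC n k C 1" by (rule inN) (use True k1 in \<open>simp add: adj_def2\<close>)
    have b1: "0 \<notin> nbhdC n k C (k + 1)" by (rule notN) (use True in \<open>auto simp: adj_def2\<close>)
    have lx: "lext n k C (open_nbhd n k 0) ws" unfolding ws_def lext.simps
    proof (intro conjI)
      show "nbhdC n k C (k + 1) - open_nbhd n k 0 \<noteq> {}" by (rule diff_ne[OF a1]) (use K0 True in simp)
      show "nbhdC n k C 1 - (open_nbhd n k 0 \<union> nbhdC n k C (k + 1)) \<noteq> {}" by (rule diff_ne[OF a2]) (use K0 b1 nk in simp)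
    qed simp
    have cv: "cover n k C (open_nbhd n k 0) ws = {0..<n}"
    proof
      show "cover n k C (open_nbhd n k 0) ws \<subseteq> {0..<n}" by (rule cover_sub[OF open_sub]) (use True in \<open>auto simp: ws_def\<close>)
      show "{0..<n} \<subseteq> cover n k C (open_nbhd n k 0) ws"
      proof
        fix x assume x: "x \<in> {0..<n}"
        have xn: "x < n" using x by simp
        have "x = 0 \<or> x = k + 1 \<or> x \<in> open_nbhd n k 0" unfolding K0 using xn True by arith
        then show "x \<in> cover n k C (open_nbhd n k 0) ws" using a1 a2 unfolding cover_def ws_def by auto
      qed
    qed
    have "legal_seq n k C (0 # ws)" unfolding legal_cons N0 using lx True k1 unfolding ws_def by auto
    moreover have "dominating_seq n k C (0 # ws)" unfolding dom_cons N0 using cv .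
    moreover have "length ws = n - 2 * k" using True unfolding ws_def by simp
    ultimately show ?thesis by blast
  next
    case False
    then have T: "n = 2 * k + 3" using n by simp
    have "[k+1..<n-k] = [k+1, k+2]" using T by (simp add: upt_rec)
    then have "k + 1 \<notin> C \<or> k + 2 \<notin> C" using g by auto
    then show ?thesis
    proof
      assume kC: "k + 1 \<notin> C"
      define ws where "ws = [k + 1, n - 1, 1]"
      have a1: "k + 2 \<in> nbhdC n k C (k + 1)" by (rule inN) (use T k1 in \<open>simp add: adj_def2\<close>)
      have a2: "0 \<in> nbhdC n k C (n - 1)" by (rule inN) (use T k1 in \<open>simp add: adj_def2\<close>)
      have a3: "k + 1 \<in> nbhdC n k C 1" by (rule inN) (use T k1 in \<open>simp add: adj_def2\<close>)
      have b1: "0 \<notin> nbhdC n k C (k + 1)" by (rule notN) (use T in \<open>auto simp: adj_def2\<close>)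
      have b2: "k + 1 \<notin> nbhdC n k C (k + 1)" by (rule notN_open[OF kC]) (simp add: adj_def2)
      have b3: "k + 1 \<notin> nbhdC n k C (n - 1)" by (rule notN) (use T in \<open>auto simp: adj_def2\<close>)
      have lx: "lext n k C (open_nbhd n k 0) ws" unfolding ws_def lext.simps
      proof (intro conjI)
        show "nbhdC n k C (k + 1) - open_nbhd n k 0 \<noteq> {}" by (rule diff_ne[OF a1]) (use K0 T in simp)
        show "nbhdC n k C (n - 1) - (open_nbhd n k 0 \<union> nbhdC n k C (k + 1)) \<noteq> {}" by (rule diff_ne[OF a2]) (use K0 b1 nk in simp)
        show "nbhdC n k C 1 - (open_nbhd n k 0 \<union> nbhdC n k C (k + 1) \<union> nbhdC n k C (n - 1)) \<noteq> {}"
          by (rule diff_ne[OF a3]) (use K0 b2 b3 T nk in simp)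
      qed simp
      have cv: "cover n k C (open_nbhd n k 0) ws = {0..<n}"
      proof
        show "cover n k C (open_nbhd n k 0) ws \<subseteq> {0..<n}" by (rule cover_sub[OF open_sub]) (use T in \<open>auto simp: ws_def\<close>)
        show "{0..<n} \<subseteq> cover n k C (open_nbhd n k 0) ws"
        proof
          fix x assume x: "x \<in> {0..<n}"
          have xn: "x < n" using x by simp
          have "x = 0 \<or> x = k + 1 \<or> x = k + 2 \<or> x \<in> open_nbhd n k 0" unfolding K0 using xn T by arith
          then show "x \<in> cover n k C (open_nbhd n k 0) ws" using a1 a2 a3 unfolding cover_def ws_def by auto
        qed
      qed
      have "legal_seq n k C (0 # ws)" unfolding legal_cons N0 using lx T k1 unfolding ws_def by auto
      moreover have "dominating_seq n k C (0 # ws)" unfolding dom_cons N0 using cv .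
      moreover have "length ws = n - 2 * k" using T unfolding ws_def by simp
      ultimately show ?thesis by blast
    next
      assume kC: "k + 2 \<notin> C"
      define ws where "ws = [k + 2, 1, n - 1]"
      have a1: "k + 1 \<in> nbhdC n k C (k + 2)" by (rule inN) (use T k1 in \<open>simp add: adj_def2\<close>)
      have a2: "0 \<in> nbhdC n k C 1" by (rule inN) (use T k1 in \<open>simp add: adj_def2\<close>)
      have a3: "k + 2 \<in> nbhdC n k C (n - 1)" by (rule inN) (use T k1 in \<open>simp add: adj_def2\<close>)
      have b1: "0 \<notin> nbhdC n k C (k + 2)" by (rule notN) (use T in \<open>auto simp: adj_def2\<close>)
      have b2: "k + 2 \<notin> nbhdC n k C (k + 2)" by (rule notN_open[OF kC]) (simp add: adj_def2)
      have b3: "k + 2 \<notin> nbhdC n k C 1" by (rule notN) (use T in \<open>auto simp: adj_def2\<close>)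
      have lx: "lext n k C (open_nbhd n k 0) ws" unfolding ws_def lext.simps
      proof (intro conjI)
        show "nbhdC n k C (k + 2) - open_nbhd n k 0 \<noteq> {}" by (rule diff_ne[OF a1]) (use K0 T in simp)
        show "nbhdC n k C 1 - (open_nbhd n k 0 \<union> nbhdC n k C (k + 2)) \<noteq> {}" by (rule diff_ne[OF a2]) (use K0 b1 nk in simp)
        show "nbhdC n k C (n - 1) - (open_nbhd n k 0 \<union> nbhdC n k C (k + 2) \<union> nbhdC n k C 1) \<noteq> {}"
          by (rule diff_ne[OF a3]) (use K0 b2 b3 T nk in simp)
      qed simp
      have cv: "cover n k C (open_nbhd n k 0) ws = {0..<n}"
      proof
        show "cover n k C (open_nbhd n k 0) ws \<subseteq> {0..<n}" by (rule cover_sub[OF open_sub]) (use T in \<open>auto simp: ws_def\<close>)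
        show "{0..<n} \<subseteq> cover n k C (open_nbhd n k 0) ws"
        proof
          fix x assume x: "x \<in> {0..<n}"
          have xn: "x < n" using x by simp
          have "x = 0 \<or> x = k + 1 \<or> x = k + 2 \<or> x \<in> open_nbhd n k 0" unfolding K0 using xn T by arith
          then show "x \<in> cover n k C (open_nbhd n k 0) ws" using a1 a2 a3 unfolding cover_def ws_def by auto
        qed
      qed
      have "legal_seq n k C (0 # ws)" unfolding legal_cons N0 using lx T k1 unfolding ws_def by auto
      moreover have "dominating_seq n k C (0 # ws)" unfolding dom_cons N0 using cv .
      moreover have "length ws = n - 2 * k" using T unfolding ws_def by simp
      ultimately show ?thesis by blast
    qed
  qed
qed

lemma Z_suf: assumes k1: "k \<ge> 1" and n: "2 * k + 2 \<le> n" and CV: "C \<subseteq> {0..<n}" and C0: "0 \<notin> C"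
  and kn: "k = 1 \<or> n \<le> 2 * k + 3" and g: "good_config C [k+1..<n-k]"
shows "\<exists>ws. legal_seq n k C (0 # ws) \<and> dominating_seq n k C (0 # ws) \<and> length ws = n - 2 * k"
proof (cases "k = 1")
  case True
  have n4: "4 \<le> n" using n True by simp
  have N0: "nbhdC n k C 0 = open_nbhd n k 0" using C0 unfolding nbhdC_def by simp
  have K: "KK n 0 0 = open_nbhd n 1 0" using KK00[OF n4] .
  have "[2 * 0 + 2..<n - 2 * 0 - 1] = [k+1..<n-k]" using True by simp
  then have g': "good_config C [2 * 0 + 2..<n - 2 * 0 - 1]" using g by simp
  obtain ws where ws: "distinct ws" "set ws \<subseteq> {0..<n}" "\<forall>w\<in>set ws. \<not> chain n 0 0 w"
     "lext1 n 1 C (KK n 0 0) ws" "cover n 1 C (KK n 0 0) ws = {0..<n}"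
    using G_suf[OF n4 _ g'] n4 by auto
  have z: "0 \<notin> set ws" using ws(3) n4 by (auto simp: chain00)
  have "legal_seq n k C (0 # ws)" unfolding legal_cons N0 using ws(1,2,4) z lext1_lext K True n4 by auto
  moreover have "dominating_seq n k C (0 # ws)" unfolding dom_cons N0 using ws(5) K True by simp
  moreover have "length ws = n - 2 * k"
  proof -
    have "card (cover n 1 C (KK n 0 0) ws) = card (KK n 0 0) + length ws"
      by (rule lext1_count[OF _ ws(2) ws(4)]) (rule finite_subset[OF KK_sub], simp)
    moreover have "card (KK n 0 0) = 2" using K card_open0[of 1 n] n4 by simp
    ultimately show ?thesis using ws(5) True by simp
  qed
  ultimately show ?thesis by blast
next
  case False
  then have "n \<le> 2 * k + 3" using kn by simp
  then show ?thesis using Z_suf_k2[OF k1 n _ C0 g] by blast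
qed

lemma Z_path2: assumes k1: "k \<ge> 1" and n: "2 * k + 2 \<le> n" and kn: "k = 1 \<or> n \<le> 2 * k + 3"
  shows "induces_path n k ({0..<n} - closed_nbhd n k 0) [k+1..<n-k]"
  unfolding induces_path_def
proof (intro conjI allI impI)
  show "distinct [k+1..<n-k]" by simp
  show "set [k+1..<n-k] = {0..<n} - closed_nbhd n k 0" using Vminus_closed0[of k n] n by simp
  fix p q assume p: "p < length [k+1..<n-k]" and q: "q < length [k+1..<n-k]"
  have pq: "p < n - 2 * k - 1" "q < n - 2 * k - 1" using p q by auto
  have e: "[k+1..<n-k] ! p = k + 1 + p" "[k+1..<n-k] ! q = k + 1 + q" using pq by auto
  show "web_adj n k ([k+1..<n-k] ! p) ([k+1..<n-k] ! q) = (p = q + 1 \<or> q = p + 1)"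
    unfolding e adj_def2 using pq kn k1 n by auto
qed

lemma ip_rev: "induces_path n k S as \<Longrightarrow> induces_path n k S (rev as)"
  unfolding induces_path_def
proof (intro conjI allI impI)
  assume h: "distinct as \<and> set as = S \<and> (\<forall>p<length as. \<forall>q<length as. web_adj n k (as ! p) (as ! q) = (p = q + 1 \<or> q = p + 1))"
  show "distinct (rev as)" "set (rev as) = S" using h by auto
  fix p q assume p: "p < length (rev as)" and q: "q < length (rev as)"
  have "web_adj n k (rev as ! p) (rev as ! q) = web_adj n k (as ! (length as - 1 - p)) (as ! (length as - 1 - q))"
    using p q by (simp add: rev_nth)
  also have "\<dots> = (length as - 1 - p = length as - 1 - q + 1 \<or> length as - 1 - q = length as - 1 - p + 1)"
    using h p q by auto
  also have "\<dots> = (p = q + 1 \<or> q = p + 1)" using p q by auto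
  finally show "web_adj n k (rev as ! p) (rev as ! q) = (p = q + 1 \<or> q = p + 1)" .
qed

lemma adj1S: assumes "2 \<le> x" "x \<le> n - 2" "2 \<le> y" "y \<le> n - 2" "4 \<le> n"
  shows "web_adj n 1 x y \<longleftrightarrow> x = y + 1 \<or> y = x + 1"
  unfolding adj_def2 using assms by auto

lemma P0: assumes n6: "6 \<le> n" and ip: "induces_path n 1 {2..<n-1} as"
  shows "as ! 0 = 2 \<or> as ! 0 = n - 2"
proof (rule ccontr)
  assume "\<not> (as ! 0 = 2 \<or> as ! 0 = n - 2)"
  have d: "distinct as" "set as = {2..<n-1}" and A: "\<And>p q. p < length as \<Longrightarrow> q < length as \<Longrightarrow>
      web_adj n 1 (as ! p) (as ! q) = (p = q + 1 \<or> q = p + 1)" using ip unfolding induces_path_def by auto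
  have ne: "as \<noteq> []" using d n6 by auto
  then have "as ! 0 \<in> {2..<n-1}" using d(2) nth_mem by fastforce
  then have x: "3 \<le> as ! 0" "as ! 0 \<le> n - 3" using \<open>\<not> (as ! 0 = 2 \<or> as ! 0 = n - 2)\<close> by auto
  have "as ! 0 - 1 \<in> set as" "as ! 0 + 1 \<in> set as" using x d(2) by auto
  then obtain i j where ij: "i < length as" "as ! i = as ! 0 - 1" "j < length as" "as ! j = as ! 0 + 1"
    by (metis in_set_conv_nth)
  have l0: "0 < length as" using ne by simp
  have "web_adj n 1 (as ! 0) (as ! i)" using ij x n6 by (subst adj1S) auto
  then have "i = 1" using A[OF l0 ij(1)] by simp
  moreover have "web_adj n 1 (as ! 0) (as ! j)" using ij x n6 by (subst adj1S) auto
  then have "j = 1" using A[OF l0 ij(3)] by simp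
  ultimately show False using ij x by simp
qed

lemma start2: assumes n6: "6 \<le> n" and ip: "induces_path n 1 {2..<n-1} as" and len: "length as = n - 3"
  and h0: "as ! 0 = 2"
  shows "as = [2..<n-1]"
proof -
  have d: "distinct as" "set as = {2..<n-1}" and A: "\<And>p q. p < length as \<Longrightarrow> q < length as \<Longrightarrow>
      web_adj n 1 (as ! p) (as ! q) = (p = q + 1 \<or> q = p + 1)" using ip unfolding induces_path_def by auto
  have inS: "2 \<le> as ! p \<and> as ! p \<le> n - 2" if "p < length as" for p
    using nth_mem[OF that] d(2) by auto
  have main: "\<forall>q\<le>p. q < length as \<longrightarrow> as ! q = 2 + q" for p
  proof (induction p)
    case 0
    then show ?case using h0 by simp
  next
    case (Suc p)
    show ?case
    proof (intro allI impI)
      fix q assume q: "q \<le> Suc p" "q < length as"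
      show "as ! q = 2 + q"
      proof (cases "q \<le> p")
        case True
        then show ?thesis using Suc q by simp
      next
        case False
        then have qs: "q = Suc p" using q by simp
        have pp: "as ! p = 2 + p" using Suc q qs by simp
        have adj: "web_adj n 1 (as ! p) (as ! q)" using A[of p q] q qs by simp
        have "as ! q = as ! p + 1 \<or> as ! p = as ! q + 1" using adj adj1S inS[of p] inS[of q] q qs n6 by auto
        moreover have "as ! q \<noteq> 1 + p"
        proof
          assume a: "as ! q = 1 + p"
          then have "p \<ge> 1" using inS[OF q(2)] by simp
          then have "as ! (p - 1) = 1 + p" using Suc q qs by simp
          then have "as ! (p - 1) = as ! q" using a by simp
          moreover have "p - 1 \<noteq> q" "p - 1 < length as" using qs q by auto
          ultimately show False using d(1) q(2) nth_eq_iff_index_eq by blast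
        qed
        ultimately show ?thesis using pp qs by auto
      qed
    qed
  qed
  show ?thesis
  proof (rule nth_equalityI)
    show "length as = length [2..<n-1]" using len by simp
    fix i assume "i < length as"
    then show "as ! i = [2..<n-1] ! i" using main[of i] len by simp
  qed
qed

lemma Z_path1: assumes k1: "k \<ge> 1" and n: "2 * k + 2 \<le> n"
  and ip: "induces_path n k ({0..<n} - closed_nbhd n k 0) as" and len: "length as = n - 2 * k - 1"
shows "(k = 1 \<or> n \<le> 2 * k + 3) \<and> (as = [k+1..<n-k] \<or> as = rev [k+1..<n-k])"
proof -
  have S: "{0..<n} - closed_nbhd n k 0 = {k+1..<n-k}" using Vminus_closed0[of k n] n by simp
  have d: "distinct as" "set as = {k+1..<n-k}" and A: "\<And>p q. p < length as \<Longrightarrow> q < length as \<Longrightarrow>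
      web_adj n k (as ! p) (as ! q) = (p = q + 1 \<or> q = p + 1)" using ip unfolding induces_path_def S by auto
  have kn: "k = 1 \<or> n \<le> 2 * k + 3"
  proof (rule ccontr)
    assume "\<not> (k = 1 \<or> n \<le> 2 * k + 3)"
    then have k2: "k \<ge> 2" and n4: "2 * k + 4 \<le> n" using k1 by auto
    have "k + 1 \<in> set as" "k + 2 \<in> set as" "k + 3 \<in> set as" using d(2) n4 by auto
    then obtain i1 i2 i3 where i: "i1 < length as" "as ! i1 = k + 1" "i2 < length as" "as ! i2 = k + 2"
      "i3 < length as" "as ! i3 = k + 3" by (metis in_set_conv_nth)
    have a: "web_adj n k (as ! i1) (as ! i2)" "web_adj n k (as ! i2) (as ! i3)" "web_adj n k (as ! i1) (as ! i3)"
      unfolding i(2,4,6) adj_def2 using n4 k2 by auto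
    have "i1 = i2 + 1 \<or> i2 = i1 + 1" using A[OF i(1) i(3)] a(1) by simp
    moreover have "i2 = i3 + 1 \<or> i3 = i2 + 1" using A[OF i(3) i(5)] a(2) by simp
    moreover have "i1 = i3 + 1 \<or> i3 = i1 + 1" using A[OF i(1) i(5)] a(3) by simp
    ultimately show False by arith
  qed
  have shape: "as = [k+1..<n-k] \<or> as = rev [k+1..<n-k]"
  proof (cases "n \<le> 2 * k + 3")
    case True
    show ?thesis
    proof (cases "n = 2 * k + 2")
      case T2: True
      then obtain x where "as = [x]" using len by (cases as) auto
      then show ?thesis using d(2) T2 by simp
    next
      case False
      then have T3: "n = 2 * k + 3" using True n by simp
      then obtain x y where xy: "as = [x, y]" using len by (cases as; cases "tl as") auto
      have nk3: "n - k = k + 3" using T3 by simp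
      have I: "{k+1..<n-k} = {k+1, k+2}" unfolding nk3 by auto
      have "{x, y} = {k+1, k+2}" using d(2) xy unfolding I by simp
      moreover have "x \<noteq> y" using d(1) xy by simp
      ultimately have "(x = k+1 \<and> y = k+2) \<or> (x = k+2 \<and> y = k+1)" by (auto simp: doubleton_eq_iff)
      moreover have "[k+1..<n-k] = [k+1, k+2]" using T3 by (simp add: upt_rec)
      ultimately show ?thesis using xy by auto
    qed
  next
    case False
    then have k1': "k = 1" and n6: "6 \<le> n" using kn by auto
    have S1a: "{k+1..<n-k} = {2..<n-1}" using k1' by auto
    have S1b: "[k+1..<n-k] = [2..<n-1]" using k1' by (intro upt_cong) auto
    note S1 = S1a S1b
    have "induces_path n k {2..<n-1} as" using ip unfolding S S1a .
    then have ip1: "induces_path n 1 {2..<n-1} as" using k1' by simp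
    have len1: "length as = n - 3" using len k1' by simp
    consider "as ! 0 = 2" | "as ! 0 = n - 2" using P0[OF n6 ip1] by blast
    then show ?thesis
    proof cases
      case 1
      then show ?thesis using start2[OF n6 ip1 len1] S1 by simp
    next
      case 2
      have ipr: "induces_path n 1 {2..<n-1} (rev as)" using ip_rev[OF ip1] .
      have lr: "length (rev as) = n - 3" using len1 by simp
      have "rev as ! 0 = as ! (n - 4)" using len1 n6 by (simp add: rev_nth)
      moreover have "as ! (n - 4) \<noteq> as ! 0" using d(1) len1 n6 by (simp add: nth_eq_iff_index_eq)
      ultimately have "rev as ! 0 = 2" using P0[OF n6 ipr] 2 by auto
      then have "rev as = [2..<n-1]" using start2[OF n6 ipr lr] by simp
      then have "as = rev [2..<n-1]" by (metis rev_rev_ident)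
      then show ?thesis using S1 by simp
    qed
  qed
  show ?thesis using kn shape by simp
qed

lemma upper: assumes "2 * k < n" "legal_seq n k C vs" "dominating_seq n k C vs"
  shows "vs \<noteq> [] \<and> length vs + card (nbhdC n k C (hd vs)) \<le> n + 1"
proof -
  have "vs \<noteq> []" using assms(1,3) unfolding dominating_seq_def web_V_def by auto
  then obtain v ws where vs: "vs = v # ws" by (cases vs) auto
  have l: "lext n k C (nbhdC n k C v) ws" "set vs \<subseteq> {0..<n}" using assms(2) unfolding vs legal_cons by auto
  have v: "v < n" using l(2) vs by auto
  have "card (cover n k C (nbhdC n k C v) ws) \<ge> card (nbhdC n k C v) + length ws"
    using lext_count[OF nbhdC_finite[OF v] _ l(1)] l(2) vs by auto
  moreover have "cover n k C (nbhdC n k C v) ws = {0..<n}" using assms(3) unfolding vs dom_cons .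
  ultimately show ?thesis using vs by simp
qed

lemma closed_diff_rot: assumes "i < n"
  shows "{0..<n} - closed_nbhd n k i = rot n i ` ({0..<n} - closed_nbhd n k 0)"
proof -
  have "closed_nbhd n k i = rot n i ` closed_nbhd n k 0" using rot_closed[of 0 n k i] rot_0[OF assms] assms by simp
  moreover have "closed_nbhd n k 0 \<subseteq> {0..<n}" unfolding closed_nbhd_def using open_sub assms by auto
  ultimately show ?thesis using rot_diff[of "{0..<n}" n "closed_nbhd n k 0" i] rot_image_V[of n i] assms by auto
qed

lemma main_equiv: assumes "k \<ge> 1" "2 * k + 2 \<le> n" "C \<subseteq> {0..<n}"
  shows "(\<exists>vs. legal_seq n k C vs \<and> dominating_seq n k C vs \<and> length vs = n - 2 * k + 1) =
    (\<exists>i \<in> web_V n - C. \<exists>as. induces_path n k (web_V n - closed_nbhd n k i) as \<and>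
                  length as = n - 2 * k - 1 \<and> good_config C as)"
proof
  assume "\<exists>vs. legal_seq n k C vs \<and> dominating_seq n k C vs \<and> length vs = n - 2 * k + 1"
  then obtain vs where vs: "legal_seq n k C vs" "dominating_seq n k C vs" "length vs = n - 2 * k + 1" by blast
  have u: "vs \<noteq> []" "length vs + card (nbhdC n k C (hd vs)) \<le> n + 1" using upper[OF _ vs(1,2)] assms by auto
  obtain v ws where vws: "vs = v # ws" using u by (cases vs) auto
  have sv: "set vs \<subseteq> {0..<n}" using vs(1) unfolding legal_seq_def web_V_def by auto
  have v: "v < n" using sv vws by auto
  have vC: "v \<notin> C" using u card_nbhdC[of k n v C] v assms vs(3) vws by (auto split: if_splits)
  define ws0 where "ws0 = map (rot n (n - v)) vs"
  have bk: "map (rot n v) ws0 = vs" unfolding ws0_def map_map o_def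
    using rot_rot[OF _ v] sv by (intro map_idI) auto
  have s0: "set ws0 \<subseteq> {0..<n}" unfolding ws0_def using rot_lt[of n] v by auto
  define C' where "C' = rC n v C"
  have L: "legal_seq n k C' ws0" "dominating_seq n k C' ws0"
    using rot_legal[OF s0, of k C v] rot_dom[OF s0, of k C v] bk vs unfolding C'_def by auto
  have h0: "hd ws0 = 0" unfolding ws0_def vws rot_def using v by simp
  obtain ws' where ws': "ws0 = 0 # ws'" using h0 ws0_def vws by (cases ws0) auto
  have C'sub: "C' \<subseteq> {0..<n}" unfolding C'_def rC_def by auto
  have C'0: "0 \<notin> C'" unfolding C'_def rC_def using rot_0[OF v] vC by auto
  have len: "length ws' = n - 2 * k" using ws' vs(3) ws0_def by (metis One_nat_def add_diff_cancel_right' length_Cons length_map list.size(4)) 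
  have Z: "(k = 1 \<or> n \<le> 2 * k + 3) \<and> good_config C' [k+1..<n-k]"
    using Z_nec[OF assms(1,2) C'sub C'0, of ws'] L ws' len by simp
  define as where "as = map (rot n v) [k+1..<n-k]"
  have sL: "set [k+1..<n-k] \<subseteq> {0..<n}" by auto
  have ip: "induces_path n k (web_V n - closed_nbhd n k v) as"
    unfolding as_def web_V_def closed_diff_rot[OF v]
    using rot_induces[of "{0..<n} - closed_nbhd n k 0" n "[k+1..<n-k]" k v] sL Z_path2[OF assms(1,2)] Z by auto
  have gc: "good_config C as" unfolding as_def good_map using Z unfolding C'_def rC_def
    by (subst good_cong[where D = "{x. x < n \<and> rot n v x \<in> C}"]) auto
  have "length as = n - 2 * k - 1" unfolding as_def by simp
  then show "\<exists>i \<in> web_V n - C. \<exists>as. induces_path n k (web_V n - closed_nbhd n k i) as \<and>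
                  length as = n - 2 * k - 1 \<and> good_config C as"
    using ip gc vC v unfolding web_V_def by auto
next
  assume "\<exists>i \<in> web_V n - C. \<exists>as. induces_path n k (web_V n - closed_nbhd n k i) as \<and>
                  length as = n - 2 * k - 1 \<and> good_config C as"
  then obtain i as where i: "i < n" "i \<notin> C" and as: "induces_path n k (web_V n - closed_nbhd n k i) as"
     "length as = n - 2 * k - 1" "good_config C as" unfolding web_V_def by auto
  have sa: "set as \<subseteq> {0..<n}" using as(1) unfolding induces_path_def web_V_def by auto
  define as0 where "as0 = map (rot n (n - i)) as"
  have bk: "map (rot n i) as0 = as" unfolding as0_def map_map o_def
    using rot_rot[OF _ i(1)] sa by (intro map_idI) auto
  have s0: "set as0 \<subseteq> {0..<n}" unfolding as0_def using rot_lt[of n] i by auto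
  have ip0: "induces_path n k ({0..<n} - closed_nbhd n k 0) as0"
    using rot_induces[of "{0..<n} - closed_nbhd n k 0" n as0 k i] s0 as(1) bk
    unfolding web_V_def closed_diff_rot[OF i(1)] by auto
  define C' where "C' = rC n i C"
  have C'sub: "C' \<subseteq> {0..<n}" unfolding C'_def rC_def by auto
  have C'0: "0 \<notin> C'" unfolding C'_def rC_def using rot_0[OF i(1)] i by auto
  have g0: "good_config C' as0"
  proof -
    have "good_config C as = good_config (rot n i -` C) as0" using bk good_map by metis
    also have "\<dots> = good_config C' as0" unfolding C'_def rC_def using s0
      by (intro good_cong) auto
    finally show ?thesis using as(3) by simp
  qed
  have P: "(k = 1 \<or> n \<le> 2 * k + 3) \<and> (as0 = [k+1..<n-k] \<or> as0 = rev [k+1..<n-k])"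
    using Z_path1[OF assms(1,2) ip0] as(2) as0_def by simp
  then have gL: "good_config C' [k+1..<n-k]" using g0 good_rev by metis
  obtain ws where ws: "legal_seq n k C' (0 # ws)" "dominating_seq n k C' (0 # ws)" "length ws = n - 2 * k"
    using Z_suf[OF assms(1,2) C'sub C'0] P gL by blast
  have sw: "set (0 # ws) \<subseteq> {0..<n}" using ws(1) unfolding legal_seq_def web_V_def by auto
  have "legal_seq n k C (map (rot n i) (0 # ws))" "dominating_seq n k C (map (rot n i) (0 # ws))"
    using rot_legal[OF sw, of k C i] rot_dom[OF sw, of k C i] ws unfolding C'_def by auto
  moreover have "length (map (rot n i) (0 # ws)) = n - 2 * k + 1" using ws by simp
  ultimately show "\<exists>vs. legal_seq n k C vs \<and> dominating_seq n k C vs \<and> length vs = n - 2 * k + 1" by blast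
qed

theorem proposition4:
  fixes n k :: nat and C :: "nat set"
  assumes "k \<ge> 1" and "n \<ge> 2 * (k + 1)" and "C \<subseteq> web_V n"
  defines "m1 \<equiv> n - Min ((\<lambda>v. card (nbhdC n k C v)) ` web_V n) + 1"
  shows "gamma_gr n k C =
          (if C = web_V n \<or>
              (\<exists>i \<in> web_V n - C. \<exists>as. induces_path n k (web_V n - closed_nbhd n k i) as \<and>
                  length as = n - 2 * k - 1 \<and> good_config C as)
           then m1 else m1 - 1)"
proof -
  have n: "2 * k + 2 \<le> n" "2 * k < n" using assms(2) by auto
  have CV: "C \<subseteq> {0..<n}" using assms(3) unfolding web_V_def .
  define S where "S = {length vs | vs. legal_seq n k C vs \<and> dominating_seq n k C vs}"
  have g: "gamma_gr n k C = Max S" unfolding gamma_gr_def S_def ..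
  have m1: "m1 = (if C = web_V n then n - 2 * k else n - 2 * k + 1)"
    unfolding m1_def Min_card[OF n(2) CV] using n by auto
  have bound: "x \<le> m1" if xS: "x \<in> S" for x
  proof -
    obtain vs where vs: "x = length vs" "legal_seq n k C vs" "dominating_seq n k C vs" using xS unfolding S_def by blast
    have u: "vs \<noteq> []" "length vs + card (nbhdC n k C (hd vs)) \<le> n + 1" using upper[OF n(2) vs(2,3)] by auto
    have "hd vs < n" using vs(2) u(1) unfolding legal_seq_def web_V_def by (auto, meson hd_in_set subsetD atLeastLessThan_iff)
    then have "card (nbhdC n k C (hd vs)) = (if hd vs \<in> C then 2 * k + 1 else 2 * k)" using card_nbhdC[OF n(2)] by simp
    moreover have "C = web_V n \<Longrightarrow> hd vs \<in> C" using \<open>hd vs < n\<close> unfolding web_V_def by auto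
    ultimately show ?thesis using u vs(1) m1 n by (auto split: if_splits)
  qed
  have fin: "finite S" using bound by (meson finite_atMost finite_subset subsetI atMost_iff)
  have base: "n - 2 * k \<in> S" using base_seq[OF assms(1) n(1), of C] unfolding S_def
    by (metis (mono_tags, lifting) diff_zero length_upt mem_Collect_eq)
  show ?thesis
  proof (cases "C = web_V n")
    case True
    then show ?thesis unfolding g m1 using fin base bound m1 True by (intro Max_eqI) auto
  next
    case False
    note eq = main_equiv[OF assms(1) n(1) CV]
    show ?thesis
    proof (cases "\<exists>vs. legal_seq n k C vs \<and> dominating_seq n k C vs \<and> length vs = n - 2 * k + 1")
      case True
      then have "m1 \<in> S" unfolding S_def m1 using False by auto
      then have "Max S = m1" using fin bound by (intro Max_eqI) auto
      then show ?thesis using g eq True False by auto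
    next
      case F2: False
      have "x \<le> n - 2 * k" if "x \<in> S" for x
      proof -
        have "x \<le> n - 2 * k + 1" using bound[OF that] m1 False by simp
        moreover have "x \<noteq> n - 2 * k + 1" using that F2 unfolding S_def by auto
        ultimately show ?thesis by simp
      qed
      then have "Max S = n - 2 * k" using fin base by (intro Max_eqI) auto
      then show ?thesis using g eq F2 False m1 by auto
    qed
  qed
qed

end
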